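(* Let $X$ be a complete metric space and $\mathcal Z_{\mathcal S}=(X,(\phi_j)_{j=0}^{n-1},(\rho_j)_{j=0}^{n-1})$ a Matkowski contractive GIFZS of degree $m$. Then there is a unique $u_{\mathcal Z}\in\mathcal F_X^*$ with $$u_{\mathcal Z}=\mathcal Z_{\mathcal S}(u_{\mathcal Z},\dots,u_{\mathcal Z})=\bigvee_{j=0}^{n-1}\rho_j(\phi_j(u_{\mathcal Z}\times\cdots\times u_{\mathcal Z})).$$ Moreover, for all $u_0,\dots,u_{m-1}\in\mathcal F_X^*$, the sequence defined by $u_{k+m}=\mathcal Z_{\mathcal S}(u_{k+m-1},u_{k+m-2},\dots,u_k)$, $k\ge0$, converges to $u_{\mathcal Z}$ in $d_\infty$.
   Context: A fuzzy subset of $X$ is $u:X\to[0,1]$. For $\alpha\in(0,1]$, $[u]^\alpha=\{x:u(x)\ge\alpha\}$, $[u]^0=\overline{\{x:u(x)>0\}}$. $\mathcal F_X^*$: fuzzy subsets that are normal, usc, compactly supported. $h$: Hausdorff metric; $d_\infty(u,v)=\sup_{\alpha\in[0,1]}h([u]^\alpha,[v]^\alpha)$. $X^m$ carries the maximum metric $d^m$. For $T:Z\to Y$, $T(u)(y)=\sup\{u(z):T(z)=y\}$ if $y\in T(Z)$, else $0$; $\rho(u)=\rho\circ u$; $(u_0\times\cdots\times u_{m-1})(x_0,\dots,x_{m-1})=\min_iu_i(x_i)$; $\vee$ is pointwise max. A family $(\rho_j)$ of maps $[0,1]\to[0,1]$ is admissible if each is nondecreasing, right continuous, $\rho_j(0)=0$,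 and $\rho_j(1)=1$ for some $j$. $f:X^m\to X$ is a generalized Matkowski contraction if $d(f(x),f(y))\le\varphi(d^m(x,y))$ for some nondecreasing $\varphi:[0,\infty)\to[0,\infty)$ with $\varphi^{(k)}(t)\to0$ for all $t>0$. A GIFZS of degree $m$ is $(X,(\phi_j),(\rho_j))$ with continuous $\phi_j:X^m\to X$ and $(\rho_j)$ admissible; it is Matkowski contractive if each $\phi_j$ is a generalized Matkowski contraction. Operator: $\mathcal Z_{\mathcal S}(u_0,\dots,u_{m-1})=\bigvee_j\rho_j(\phi_j(u_0\times\cdots\times u_{m-1}))$. *)

theory Defs
  imports "HOL-Analysis.Analysis"
begin

text \<open>Fuzzy subsets of a metric space X (here a type 'a) are maps 'a \<Rightarrow> real with
  values in [0,1]. Points of X^m are lists of length m.\<close>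

definition level :: "('a::topological_space \<Rightarrow> real) \<Rightarrow> real \<Rightarrow> 'a set" where
  "level u \<alpha> = (if \<alpha> = 0 then closure {x. u x > 0} else {x. u x \<ge> \<alpha>})"

definition usc :: "('a::topological_space \<Rightarrow> real) \<Rightarrow> bool" where
  "usc u \<longleftrightarrow> (\<forall>x. \<forall>e>0. eventually (\<lambda>y. u y < u x + e) (nhds x))"

definition Fstar :: "('a::metric_space \<Rightarrow> real) set" where
  "Fstar = {u. (\<forall>x. 0 \<le> u x \<and> u x \<le> 1) \<and> (\<exists>x. u x = 1) \<and> usc u \<and> compact (level u 0)}"

definition hausdorff :: "'a::metric_space set \<Rightarrow> 'a set \<Rightarrow> real" where
  "hausdorff A B = max (SUP a\<in>A. infdist a B) (SUP b\<in>B. infdist b A)"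

definition d_inf :: "('a::metric_space \<Rightarrow> real) \<Rightarrow> ('a \<Rightarrow> real) \<Rightarrow> real" where
  "d_inf u v = (SUP \<alpha>\<in>{0..1}. hausdorff (level u \<alpha>) (level v \<alpha>))"

definition Xpow :: "nat \<Rightarrow> 'a list set" where
  "Xpow m = {xs. length xs = m}"

definition dmax :: "nat \<Rightarrow> 'a::metric_space list \<Rightarrow> 'a list \<Rightarrow> real" where
  "dmax m xs ys = (MAX i\<in>{..<m}. dist (xs ! i) (ys ! i))"

definition cont_m :: "nat \<Rightarrow> ('a::metric_space list \<Rightarrow> 'a) \<Rightarrow> bool" where
  "cont_m m f \<longleftrightarrow> (\<forall>x\<in>Xpow m. \<forall>e>0. \<exists>d>0. \<forall>y\<in>Xpow m. dmax m x y < d \<longrightarrow> dist (f y) (f x) < e)"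

definition gen_matkowski :: "nat \<Rightarrow> ('a::metric_space list \<Rightarrow> 'a) \<Rightarrow> bool" where
  "gen_matkowski m f \<longleftrightarrow> (\<exists>\<phi>::real \<Rightarrow> real. mono_on {0..} \<phi> \<and> \<phi> ` {0..} \<subseteq> {0..} \<and>
      (\<forall>t>0. (\<lambda>k. (\<phi> ^^ k) t) \<longlonglongrightarrow> 0) \<and>
      (\<forall>x\<in>Xpow m. \<forall>y\<in>Xpow m. dist (f x) (f y) \<le> \<phi> (dmax m x y)))"

definition admissible :: "nat \<Rightarrow> (nat \<Rightarrow> real \<Rightarrow> real) \<Rightarrow> bool" where
  "admissible n \<rho> \<longleftrightarrow> (\<forall>j<n. (\<forall>t\<in>{0..1}. 0 \<le> \<rho> j t \<and> \<rho> j t \<le> 1) \<and> mono_on {0..1} (\<rho> j) \<and>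
      (\<forall>t\<in>{0..<1}. continuous (at t within {t..1}) (\<rho> j)) \<and> \<rho> j 0 = 0)
    \<and> (\<exists>j<n. \<rho> j 1 = 1)"

definition zext :: "'z set \<Rightarrow> ('z \<Rightarrow> 'y) \<Rightarrow> ('z \<Rightarrow> real) \<Rightarrow> 'y \<Rightarrow> real" where
  "zext Z T u y = (if y \<in> T ` Z then (SUP z\<in>{z\<in>Z. T z = y}. u z) else 0)"

definition fprod :: "nat \<Rightarrow> ('a \<Rightarrow> real) list \<Rightarrow> 'a list \<Rightarrow> real" where
  "fprod m us xs = (MIN i\<in>{..<m}. (us ! i) (xs ! i))"

definition ZS :: "nat \<Rightarrow> nat \<Rightarrow> (nat \<Rightarrow> 'a list \<Rightarrow> 'a) \<Rightarrow> (nat \<Rightarrow> real \<Rightarrow> real)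
    \<Rightarrow> ('a \<Rightarrow> real) list \<Rightarrow> 'a \<Rightarrow> real" where
  "ZS m n \<phi> \<rho> us x = (MAX j\<in>{..<n}. \<rho> j (zext (Xpow m) (\<phi> j) (fprod m us) x))"

end

theory Submission
  imports Defs
begin


lemma infdist_attains:
  fixes B :: "'a::metric_space set"
  assumes "compact B" "B \<noteq> {}"
  obtains b where "b \<in> B" "infdist a B = dist a b"
proof -
  have "continuous_on B (dist a)" by (intro continuous_intros)
  from continuous_attains_inf[OF assms this] obtain b where b: "b \<in> B" "\<And>y. y\<in>B \<Longrightarrow> dist a b \<le> dist a y" by blast
  have "infdist a B = dist a b"
  proof (rule antisym)
    show "infdist a B \<le> dist a b" using b(1) by (rule infdist_le)
    show "dist a b \<le> infdist a B" unfolding infdist_notempty[OF assms(2)]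
      by (rule cINF_greatest) (use assms b in auto)
  qed
  with b that show ?thesis by blast
qed

lemma infdist_bdd:
  fixes A B :: "'a::metric_space set"
  assumes "compact A"
  shows "bdd_above ((\<lambda>a. infdist a B) ` A)"
proof -
  have "compact ((\<lambda>a. infdist a B) ` A)"
    by (rule compact_continuous_image) (intro continuous_intros, fact)
  thus ?thesis by (intro bounded_imp_bdd_above compact_imp_bounded)
qed

lemma hausdorff_le_iff:
  fixes A B :: "'a::metric_space set"
  assumes "compact A" "compact B" "A \<noteq> {}" "B \<noteq> {}"
  shows "hausdorff A B \<le> e \<longleftrightarrow> (\<forall>a\<in>A. infdist a B \<le> e) \<and> (\<forall>b\<in>B. infdist b A \<le> e)"
  unfolding hausdorff_def max.bounded_iff
  using infdist_bdd[OF assms(1), of B] infdist_bdd[OF assms(2), of A] assms(3,4)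
  by (simp add: cSUP_le_iff)

lemma hausdorff_ge:
  fixes A B :: "'a::metric_space set"
  assumes "compact A" "compact B" "A \<noteq> {}" "B \<noteq> {}"
  shows "a \<in> A \<Longrightarrow> infdist a B \<le> hausdorff A B" "b \<in> B \<Longrightarrow> infdist b A \<le> hausdorff A B"
  using hausdorff_le_iff[OF assms, of "hausdorff A B"] by auto

lemma hausdorff_nonneg:
  fixes A B :: "'a::metric_space set"
  assumes "compact A" "compact B" "A \<noteq> {}" "B \<noteq> {}"
  shows "0 \<le> hausdorff A B"
  using hausdorff_ge(1)[OF assms] assms(3) infdist_nonneg by (meson ex_in_conv order_trans)

lemma hausdorff_sym: "hausdorff A B = hausdorff B A"
  unfolding hausdorff_def by (simp add: max.commute)

lemma hausdorff_refl:
  fixes A :: "'a::metric_space set"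
  assumes "compact A" "A \<noteq> {}"
  shows "hausdorff A A = 0"
  using hausdorff_le_iff[OF assms(1) assms(1) assms(2) assms(2), of 0] hausdorff_nonneg[OF assms(1) assms(1) assms(2) assms(2)] by auto

lemma infdist_le_hausdorff:
  fixes A B :: "'a::metric_space set"
  assumes "compact B" "B \<noteq> {}" "compact C" "C \<noteq> {}"
  shows "infdist a C \<le> infdist a B + hausdorff B C"
proof -
  obtain b where b: "b \<in> B" "infdist a B = dist a b" using infdist_attains[OF assms(1,2)] by blast
  have "infdist a C \<le> infdist b C + dist a b" by (rule infdist_triangle)
  also have "infdist b C \<le> hausdorff B C" using hausdorff_ge(1)[OF assms(1,3,2,4) b(1)] .
  finally show ?thesis using b by simp
qed

lemma hausdorff_triangle:
  fixes A B C :: "'a::metric_space set"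
  assumes "compact A" "A \<noteq> {}" "compact B" "B \<noteq> {}" "compact C" "C \<noteq> {}"
  shows "hausdorff A C \<le> hausdorff A B + hausdorff B C"
proof -
  have "infdist a C \<le> hausdorff A B + hausdorff B C" if "a \<in> A" for a
    using infdist_le_hausdorff[OF assms(3-6), of a] hausdorff_ge(1)[OF assms(1,3,2,4) that] by linarith
  moreover have "infdist c A \<le> hausdorff A B + hausdorff B C" if "c \<in> C" for c
    using infdist_le_hausdorff[OF assms(3,4,1,2), of c] hausdorff_ge(2)[OF assms(3,5,4,6) that]
      hausdorff_sym[of A B] by linarith
  ultimately show ?thesis using hausdorff_le_iff[OF assms(1,5,2,6)] by blast
qed

lemma hausdorff_zero:
  fixes A B :: "'a::metric_space set"
  assumes "compact A" "compact B" "A \<noteq> {}" "B \<noteq> {}" "hausdorff A B \<le> 0"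
  shows "A = B"
proof -
  have "\<forall>a\<in>A. infdist a B \<le> 0" "\<forall>b\<in>B. infdist b A \<le> 0" using hausdorff_le_iff[OF assms(1-4)] assms(5) by auto
  hence "\<forall>a\<in>A. a \<in> B" "\<forall>b\<in>B. b \<in> A"
    using in_closed_iff_infdist_zero assms compact_imp_closed infdist_nonneg by (metis order.antisym)+
  thus ?thesis by blast
qed



lemma FstarD:
  assumes "u \<in> Fstar"
  shows "0 \<le> u x" "u x \<le> 1" "\<exists>x. u x = 1" "usc u" "compact (level u 0)"
  using assms unfolding Fstar_def by auto

lemma usc_closed:
  fixes u :: "'a::topological_space \<Rightarrow> real"
  assumes "usc u"
  shows "closed {x. \<alpha> \<le> u x}"
proof -
  have "open {x. u x < \<alpha>}"
  proof (subst open_subopen, intro ballI)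
    fix x assume "x \<in> {x. u x < \<alpha>}"
    hence "\<alpha> - u x > 0" by simp
    with assms have "eventually (\<lambda>y. u y < u x + (\<alpha> - u x)) (nhds x)" unfolding usc_def by blast
    then obtain S where "open S" "x \<in> S" "\<forall>y\<in>S. u y < \<alpha>" unfolding eventually_nhds by auto
    thus "\<exists>T. open T \<and> x \<in> T \<and> T \<subseteq> {x. u x < \<alpha>}" by blast
  qed
  moreover have "- {x. \<alpha> \<le> u x} = {x. u x < \<alpha>}" by auto
  ultimately show ?thesis unfolding closed_def by simp
qed

lemma closed_levels_usc:
  fixes w :: "'a::topological_space \<Rightarrow> real"
  assumes "\<And>x. w x \<le> 1" "\<And>\<alpha>. 0 < \<alpha> \<Longrightarrow> \<alpha> \<le> 1 \<Longrightarrow> closed {x. \<alpha> \<le> w x}"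
    "\<And>x. 0 \<le> w x"
  shows "usc w"
  unfolding usc_def
proof (intro allI impI)
  fix x and e :: real assume e: "e > 0"
  show "eventually (\<lambda>y. w y < w x + e) (nhds x)"
  proof (cases "w x + e \<le> 1")
    case True
    have "open (- {y. w x + e \<le> w y})" using assms(2)[OF _ True] assms(3)[of x] e by auto
    moreover have "x \<in> - {y. w x + e \<le> w y}" using e by auto
    ultimately have "eventually (\<lambda>y. y \<in> - {y. w x + e \<le> w y}) (nhds x)" by (rule eventually_nhds_in_open)
    thus ?thesis by eventually_elim auto
  next
    case False
    thus ?thesis using assms(1) by (intro always_eventually) (smt (verit))
  qed
qed

lemma level_pos: "\<alpha> \<noteq> 0 \<Longrightarrow> level u \<alpha> = {x. \<alpha> \<le> u x}"
  unfolding level_def by simp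

lemma level_sub0: "0 < \<alpha> \<Longrightarrow> level u \<alpha> \<subseteq> level u 0"
  unfolding level_def using closure_subset by force

lemma level_compact:
  assumes "u \<in> Fstar" "0 \<le> \<alpha>"
  shows "compact (level u \<alpha>)"
proof (cases "\<alpha> = 0")
  case True thus ?thesis using FstarD[OF assms(1)] by simp
next
  case False
  hence "level u \<alpha> = level u 0 \<inter> {x. \<alpha> \<le> u x}" using level_sub0[of \<alpha> u] assms(2) level_pos[OF False] by auto
  thus ?thesis using FstarD[OF assms(1)] usc_closed by (metis compact_Int_closed)
qed

lemma level_ne:
  assumes "u \<in> Fstar" "\<alpha> \<le> 1"
  shows "level u \<alpha> \<noteq> {}"
proof -
  obtain x where x: "u x = 1" using FstarD[OF assms(1)] by blast
  show ?thesis
  proof (cases "\<alpha> = 0")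
    case True
    have "x \<in> {x. u x > 0}" using x by simp
    thus ?thesis using True closure_subset unfolding level_def by auto
  next
    case False
    have "x \<in> level u \<alpha>" using x assms(2) level_pos[OF False, of u] by auto
    thus ?thesis by blast
  qed
qed

lemma level_mono:
  assumes "0 \<le> \<alpha>" "\<alpha> \<le> \<beta>"
  shows "level u \<beta> \<subseteq> level u \<alpha>"
proof (cases "\<alpha> = 0")
  case True thus ?thesis using level_sub0[of \<beta> u] assms by (cases "\<beta> = 0") auto
next
  case False
  hence "\<beta> \<noteq> 0" using assms by auto
  thus ?thesis using False assms level_pos[OF False, of u] level_pos[of \<beta> u] by auto
qed

lemma hausdorff_bound:
  fixes A B :: "'a::metric_space set"
  assumes "compact A" "compact B" "A \<noteq> {}" "B \<noteq> {}" "\<And>x y. x \<in> A \<union> B \<Longrightarrow> y \<in> A \<union> B \<Longrightarrow> dist x y \<le> r"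
  shows "hausdorff A B \<le> r"
proof -
  obtain a b where ab: "a \<in> A" "b \<in> B" using assms by blast
  show ?thesis unfolding hausdorff_le_iff[OF assms(1-4)]
    using assms(5) ab by (meson UnI1 UnI2 infdist_le2)
qed

lemma dinf_bdd:
  fixes u v :: "'a::metric_space \<Rightarrow> real"
  assumes "u \<in> Fstar" "v \<in> Fstar"
  shows "bdd_above ((\<lambda>\<alpha>. hausdorff (level u \<alpha>) (level v \<alpha>)) ` {0..1})"
proof -
  have "bounded (level u 0 \<union> level v 0)" using FstarD(5)[OF assms(1)] FstarD(5)[OF assms(2)] by (intro compact_imp_bounded compact_Un)
  then obtain c r where cr: "\<forall>y\<in>level u 0 \<union> level v 0. dist c y \<le> r" unfolding bounded_def by blast
  have "hausdorff (level u \<alpha>) (level v \<alpha>) \<le> 2 * r" if "\<alpha> \<in> {0..1}" for \<alpha>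
  proof (rule hausdorff_bound)
    show "compact (level u \<alpha>)" "compact (level v \<alpha>)" "level u \<alpha> \<noteq> {}" "level v \<alpha> \<noteq> {}"
      using that assms level_compact level_ne by auto
    fix x y assume "x \<in> level u \<alpha> \<union> level v \<alpha>" "y \<in> level u \<alpha> \<union> level v \<alpha>"
    hence "x \<in> level u 0 \<union> level v 0" "y \<in> level u 0 \<union> level v 0"
      using level_mono[of 0 \<alpha> u] level_mono[of 0 \<alpha> v] that by auto
    hence "dist c x \<le> r" "dist c y \<le> r" using cr by auto
    thus "dist x y \<le> 2 * r" by (smt (verit) dist_commute dist_triangle)
  qed
  thus ?thesis by (intro bdd_aboveI2[where M="2*r"]) auto
qed

lemma dinf_le_iff:
  fixes u v :: "'a::metric_space \<Rightarrow> real"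
  assumes "u \<in> Fstar" "v \<in> Fstar"
  shows "d_inf u v \<le> e \<longleftrightarrow> (\<forall>\<alpha>\<in>{0..1}. hausdorff (level u \<alpha>) (level v \<alpha>) \<le> e)"
  unfolding d_inf_def using dinf_bdd[OF assms] by (simp add: cSUP_le_iff)

lemma hausdorff_le_dinf:
  fixes u v :: "'a::metric_space \<Rightarrow> real"
  assumes "u \<in> Fstar" "v \<in> Fstar" "\<alpha> \<in> {0..1}"
  shows "hausdorff (level u \<alpha>) (level v \<alpha>) \<le> d_inf u v"
  using dinf_le_iff[OF assms(1,2)] assms(3) by blast

lemma lev_facts:
  assumes "u \<in> Fstar" "\<alpha> \<in> {0..1}"
  shows "compact (level u \<alpha>)" "level u \<alpha> \<noteq> {}"
  using assms level_compact level_ne by auto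

lemma dinf_nonneg:
  fixes u v :: "'a::metric_space \<Rightarrow> real"
  assumes "u \<in> Fstar" "v \<in> Fstar"
  shows "0 \<le> d_inf u v"
proof -
  have "0 \<le> hausdorff (level u 0) (level v 0)"
    using hausdorff_nonneg lev_facts[OF assms(1), of 0] lev_facts[OF assms(2), of 0] by simp
  thus ?thesis using hausdorff_le_dinf[OF assms, of 0] by simp
qed

lemma dinf_refl:
  fixes u :: "'a::metric_space \<Rightarrow> real"
  assumes "u \<in> Fstar"
  shows "d_inf u u = 0"
proof -
  have "\<forall>\<alpha>\<in>{0..1}. hausdorff (level u \<alpha>) (level u \<alpha>) \<le> 0"
    by (metis atLeastAtMost_iff hausdorff_refl lev_facts(1,2)[OF assms] order_refl)
  thus ?thesis using dinf_le_iff[OF assms assms, of 0] dinf_nonneg[OF assms assms] by simp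
qed

lemma dinf_sym: "d_inf u v = d_inf v u"
  unfolding d_inf_def using hausdorff_sym by metis

lemma dinf_triangle:
  fixes u v w :: "'a::metric_space \<Rightarrow> real"
  assumes "u \<in> Fstar" "v \<in> Fstar" "w \<in> Fstar"
  shows "d_inf u w \<le> d_inf u v + d_inf v w"
  unfolding dinf_le_iff[OF assms(1,3)]
proof
  fix \<alpha> :: real assume a: "\<alpha> \<in> {0..1}"
  have "hausdorff (level u \<alpha>) (level w \<alpha>) \<le> hausdorff (level u \<alpha>) (level v \<alpha>) + hausdorff (level v \<alpha>) (level w \<alpha>)"
    using hausdorff_triangle lev_facts[OF assms(1) a] lev_facts[OF assms(2) a] lev_facts[OF assms(3) a] by blast
  thus "hausdorff (level u \<alpha>) (level w \<alpha>) \<le> d_inf u v + d_inf v w"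
    using hausdorff_le_dinf[OF assms(1,2) a] hausdorff_le_dinf[OF assms(2,3) a] by linarith
qed

lemma dinf_zero:
  fixes u v :: "'a::metric_space \<Rightarrow> real"
  assumes "u \<in> Fstar" "v \<in> Fstar" "d_inf u v \<le> 0"
  shows "u = v"
proof -
  have eq: "level u \<alpha> = level v \<alpha>" if "\<alpha> \<in> {0..1}" for \<alpha>
    using hausdorff_zero lev_facts[OF assms(1) that] lev_facts[OF assms(2) that] assms dinf_le_iff that by blast
  show ?thesis
  proof
    fix x show "u x = v x"
    proof (rule ccontr)
      assume ne: "u x \<noteq> v x"
      show False
      proof (cases "u x < v x")
        case True
        hence "v x \<noteq> 0" "v x \<in> {0..1}" using FstarD(1,2)[OF assms(1), of x] FstarD(1,2)[OF assms(2), of x] by auto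
        hence "x \<in> level u (v x)" using eq[of "v x"] level_pos[of "v x"] by auto
        thus False using True level_pos[OF \<open>v x \<noteq> 0\<close>, of u] by auto
      next
        case False
        hence F: "v x < u x" using ne by simp
        hence "u x \<noteq> 0" "u x \<in> {0..1}" using FstarD(1,2)[OF assms(1), of x] FstarD(1,2)[OF assms(2), of x] by auto
        hence "x \<in> level v (u x)" using eq[of "u x"] level_pos[of "u x"] by auto
        thus False using F level_pos[OF \<open>u x \<noteq> 0\<close>, of v] by auto
      qed
    qed
  qed
qed



lemma level0_half:
  fixes u v :: "'a::metric_space \<Rightarrow> real"
  assumes "u \<in> Fstar" "v \<in> Fstar" "\<And>\<alpha>. 0 < \<alpha> \<Longrightarrow> \<alpha> \<le> 1 \<Longrightarrow> hausdorff (level u \<alpha>) (level v \<alpha>) \<le> e"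
  shows "\<forall>a\<in>level u 0. infdist a (level v 0) \<le> e"
proof -
  let ?S = "{y. infdist y (level v 0) \<le> e}"
  have cl: "closed ?S"
    by (rule closed_Collect_le) (intro continuous_intros)+
  have "{x. u x > 0} \<subseteq> ?S"
  proof
    fix x assume x: "x \<in> {x. u x > 0}"
    let ?a = "u x"
    have a: "0 < ?a" "?a \<le> 1" using x FstarD(2)[OF assms(1)] by auto
    hence ai: "?a \<in> {0..1}" by auto
    have "x \<in> level u ?a" using a level_pos[of ?a u] by auto
    hence "infdist x (level v ?a) \<le> e"
      using hausdorff_ge(1)[OF lev_facts(1)[OF assms(1) ai] lev_facts(1)[OF assms(2) ai]
          lev_facts(2)[OF assms(1) ai] lev_facts(2)[OF assms(2) ai]] assms(3)[OF a] by force
    moreover have "infdist x (level v 0) \<le> infdist x (level v ?a)"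
      by (rule infdist_mono[OF level_sub0[OF a(1)] lev_facts(2)[OF assms(2) ai]])
    ultimately show "x \<in> ?S" by simp
  qed
  hence "closure {x. u x > 0} \<subseteq> ?S" using cl by (rule closure_minimal)
  hence "level u 0 \<subseteq> ?S" by (simp add: level_def)
  thus ?thesis by blast
qed

lemma level0_bound:
  fixes u v :: "'a::metric_space \<Rightarrow> real"
  assumes "u \<in> Fstar" "v \<in> Fstar" "\<And>\<alpha>. 0 < \<alpha> \<Longrightarrow> \<alpha> \<le> 1 \<Longrightarrow> hausdorff (level u \<alpha>) (level v \<alpha>) \<le> e"
  shows "d_inf u v \<le> e"
proof -
  have "hausdorff (level u 0) (level v 0) \<le> e"
  proof (subst hausdorff_le_iff[OF lev_facts(1)[OF assms(1)] lev_facts(1)[OF assms(2)] lev_facts(2)[OF assms(1)] lev_facts(2)[OF assms(2)]], simp, intro conjI)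
    show "\<forall>a\<in>level u 0. infdist a (level v 0) \<le> e" using level0_half[OF assms] .
  next
    show "\<forall>a\<in>level v 0. infdist a (level u 0) \<le> e"
      by (rule level0_half[OF assms(2,1)]) (use assms(3) hausdorff_sym in metis)
  qed
  thus ?thesis unfolding dinf_le_iff[OF assms(1,2)] using assms(3)
    by (metis atLeastAtMost_iff order_le_less)
qed



lemma list_seq_compact:
  fixes z :: "nat \<Rightarrow> 'a::metric_space list"
  assumes "\<forall>k. length (z k) = m" "\<forall>k i. i < m \<longrightarrow> z k ! i \<in> K i" "\<forall>i<m. compact (K i)"
  shows "\<exists>r L. strict_mono r \<and> length L = m \<and> (\<forall>i<m. L ! i \<in> K i) \<and>
           (\<forall>i<m. (\<lambda>k. z (r k) ! i) \<longlonglongrightarrow> L ! i)"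
  using assms
proof (induction m arbitrary: z K)
  case 0
  show ?case by (rule exI[of _ id], rule exI[of _ "[]"]) (auto simp: strict_mono_def)
next
  case (Suc m)
  let ?t = "\<lambda>k. tl (z k)"
  have "\<forall>k. length (?t k) = m" using Suc.prems(1) by simp
  moreover have "\<forall>k i. i < m \<longrightarrow> ?t k ! i \<in> K (Suc i)" using Suc.prems(1,2) by (simp add: nth_tl)
  moreover have "\<forall>i<m. compact (K (Suc i))" using Suc.prems(3) by simp
  ultimately obtain r1 L1 where r1: "strict_mono r1" "length L1 = m" "\<forall>i<m. L1 ! i \<in> K (Suc i)"
     "\<forall>i<m. (\<lambda>k. ?t (r1 k) ! i) \<longlonglongrightarrow> L1 ! i"
    using Suc.IH[of ?t "\<lambda>i. K (Suc i)"] by blast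
  have "seq_compact (K 0)" using Suc.prems(3) compact_imp_seq_compact by auto
  moreover have "\<forall>k. z (r1 k) ! 0 \<in> K 0" using Suc.prems(2) by simp
  ultimately obtain l r2 where r2: "l \<in> K 0" "strict_mono r2" "((\<lambda>k. z (r1 k) ! 0) \<circ> r2) \<longlonglongrightarrow> l"
    by (rule seq_compactE)
  show ?case
  proof (intro exI conjI allI impI)
    show "strict_mono (r1 \<circ> r2)" using r1(1) r2(2) by (rule strict_mono_o)
    show "length (l # L1) = Suc m" using r1(2) by simp
    fix i assume i: "i < Suc m"
    show "(l # L1) ! i \<in> K i" using i r1(3) r2(1) by (cases i) auto
    show "(\<lambda>k. z ((r1 \<circ> r2) k) ! i) \<longlonglongrightarrow> (l # L1) ! i"
    proof (cases i)
      case 0 thus ?thesis using r2(3) by (simp add: o_def)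
    next
      case (Suc i')
      hence i': "i' < m" using i by simp
      have "((\<lambda>k. ?t (r1 k) ! i') \<circ> r2) \<longlonglongrightarrow> L1 ! i'" using r1(4) i' r2(2) LIMSEQ_subseq_LIMSEQ by blast
      moreover have "?t (r1 (r2 k)) ! i' = z (r1 (r2 k)) ! i" for k
        using Suc Suc.prems(1) i' by (simp add: nth_tl)
      ultimately show ?thesis using Suc by (simp add: o_def)
    qed
  qed
qed

lemma cont_m_seq:
  fixes f :: "'a::metric_space list \<Rightarrow> 'a"
  assumes "m \<ge> 1" "cont_m m f" "\<forall>k. z k \<in> Xpow m" "L \<in> Xpow m"
    "\<forall>i<m. (\<lambda>k. z k ! i) \<longlonglongrightarrow> L ! i"
  shows "(\<lambda>k. f (z k)) \<longlonglongrightarrow> f L"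
proof (rule tendstoI)
  fix e :: real assume e: "e > 0"
  obtain d where d: "d > 0" "\<forall>y\<in>Xpow m. dmax m L y < d \<longrightarrow> dist (f y) (f L) < e"
    using assms(2,4) e unfolding cont_m_def by blast
  have "\<forall>i\<in>{..<m}. eventually (\<lambda>k. dist (z k ! i) (L ! i) < d) sequentially"
    using assms(5) d(1) tendstoD by blast
  hence "eventually (\<lambda>k. \<forall>i\<in>{..<m}. dist (z k ! i) (L ! i) < d) sequentially"
    by (intro eventually_ball_finite) auto
  thus "eventually (\<lambda>k. dist (f (z k)) (f L) < e) sequentially"
  proof eventually_elim
    case (elim k)
    have "dmax m L (z k) < d" unfolding dmax_def using assms(1) elim
      by (subst Max_less_iff) (auto simp: dist_commute lessThan_empty_iff)
    thus ?case using d(2) assms(3) by blast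
  qed
qed

lemma usc_limit:
  fixes u :: "'a::metric_space \<Rightarrow> real"
  assumes "usc u" "y \<longlonglongrightarrow> p" "t \<longlonglongrightarrow> b" "\<forall>k. t k \<le> u (y k)"
  shows "b \<le> u p"
proof (rule field_le_epsilon)
  fix e :: real assume e: "0 < e"
  have "eventually (\<lambda>q. u q < u p + e) (nhds p)" using assms(1) e unfolding usc_def by blast
  hence "eventually (\<lambda>k. u (y k) < u p + e) sequentially"
    using assms(2) unfolding filterlim_iff by blast
  hence "eventually (\<lambda>k. t k \<le> u p + e) sequentially"
    by eventually_elim (use assms(4) in \<open>smt (verit)\<close>)
  thus "b \<le> u p + e" using assms(3) by (intro tendsto_upperbound) auto
qed

definition Pset :: "nat \<Rightarrow> ('a::topological_space \<Rightarrow> real) list \<Rightarrow> real \<Rightarrow> 'a list set" where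
  "Pset m us \<beta> = {z \<in> Xpow m. \<forall>i<m. z ! i \<in> level (us ! i) \<beta>}"

lemma image_Pset_compact:
  fixes f :: "'a::metric_space list \<Rightarrow> 'a"
  assumes "m \<ge> 1" "cont_m m f" "\<forall>i<m. us ! i \<in> Fstar" "0 \<le> \<beta>"
  shows "compact (f ` Pset m us \<beta>)"
  unfolding compact_eq_seq_compact_metric seq_compact_def
proof (intro allI impI)
  fix y :: "nat \<Rightarrow> 'a" assume "\<forall>k. y k \<in> f ` Pset m us \<beta>"
  hence "\<forall>k. \<exists>w. w \<in> Pset m us \<beta> \<and> y k = f w" by blast
  then obtain z :: "nat \<Rightarrow> 'a list" where z: "\<forall>k. z k \<in> Pset m us \<beta> \<and> y k = f (z k)" by metis
  have "\<forall>k. length (z k) = m" "\<forall>k i. i < m \<longrightarrow> z k ! i \<in> level (us ! i) \<beta>"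
    using z unfolding Pset_def Xpow_def by auto
  moreover have "\<forall>i<m. compact (level (us ! i) \<beta>)" using assms(3,4) level_compact by blast
  ultimately obtain r L where rL: "strict_mono r" "length L = m" "\<forall>i<m. L ! i \<in> level (us ! i) \<beta>"
      "\<forall>i<m. (\<lambda>k. z (r k) ! i) \<longlonglongrightarrow> L ! i"
    using list_seq_compact[of z m "\<lambda>i. level (us ! i) \<beta>"] by blast
  have L: "L \<in> Pset m us \<beta>" using rL unfolding Pset_def Xpow_def by auto
  have "(\<lambda>k. f (z (r k))) \<longlonglongrightarrow> f L"
    by (rule cont_m_seq[OF assms(1,2)]) (use z rL(2,4) in \<open>auto simp: Pset_def Xpow_def\<close>)
  hence "(y \<circ> r) \<longlonglongrightarrow> f L" using z by (simp add: o_def)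
  thus "\<exists>l\<in>f ` Pset m us \<beta>. \<exists>r. strict_mono r \<and> (y \<circ> r) \<longlonglongrightarrow> l" using L rL(1) by blast
qed

lemma fprod_ge:
  assumes "m \<ge> 1"
  shows "\<beta> \<le> fprod m us z \<longleftrightarrow> (\<forall>i<m. \<beta> \<le> (us ! i) (z ! i))"
  unfolding fprod_def using assms by (subst Min_ge_iff) (auto simp: lessThan_empty_iff)

lemma fprod_le:
  assumes "m \<ge> 1" "\<forall>i<m. us ! i \<in> Fstar"
  shows "fprod m us z \<le> 1"
proof -
  have "fprod m us z \<le> (us ! 0) (z ! 0)" unfolding fprod_def using assms by (intro Min_le) auto
  moreover have "(us ! 0) (z ! 0) \<le> 1" using FstarD(2) assms by force
  ultimately show ?thesis by linarith
qed

lemma fprod_nonneg: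
  assumes "m \<ge> 1" "\<forall>i<m. us ! i \<in> Fstar"
  shows "0 \<le> fprod m us z"
  using fprod_ge[OF assms(1), of 0] FstarD(1) assms(2) by blast



lemma zext_range:
  assumes "m \<ge> 1" "\<forall>i<m. us ! i \<in> Fstar"
  shows "0 \<le> zext (Xpow m) f (fprod m us) x" "zext (Xpow m) f (fprod m us) x \<le> 1"
proof -
  have bd: "bdd_above (fprod m us ` S)" for S using fprod_le[OF assms] by (intro bdd_aboveI2) auto
  have "0 \<le> zext (Xpow m) f (fprod m us) x \<and> zext (Xpow m) f (fprod m us) x \<le> 1"
  proof (cases "x \<in> f ` Xpow m")
    case True
    then obtain z where z: "z \<in> Xpow m" "f z = x" by blast
    let ?S = "{z \<in> Xpow m. f z = x}"
    have ne: "?S \<noteq> {}" using z by blast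
    have "0 \<le> fprod m us z" using fprod_nonneg[OF assms] .
    also have "fprod m us z \<le> (SUP z\<in>?S. fprod m us z)" by (rule cSUP_upper) (use z bd in auto)
    finally have "0 \<le> (SUP z\<in>?S. fprod m us z)" .
    moreover have "(SUP z\<in>?S. fprod m us z) \<le> 1" by (rule cSUP_least[OF ne]) (use fprod_le[OF assms] in auto)
    ultimately show ?thesis using True unfolding zext_def by simp
  qed (simp add: zext_def)
  thus "0 \<le> zext (Xpow m) f (fprod m us) x" "zext (Xpow m) f (fprod m us) x \<le> 1" by auto
qed

lemma Pset_pos: "\<beta> \<noteq> 0 \<Longrightarrow> Pset m us \<beta> = {z \<in> Xpow m. \<forall>i<m. \<beta> \<le> (us ! i) (z ! i)}"
  unfolding Pset_def level_pos by (auto simp: level_pos)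

lemma zext_ge:
  fixes f :: "'a::metric_space list \<Rightarrow> 'a"
  assumes "m \<ge> 1" "\<forall>i<m. us ! i \<in> Fstar" "cont_m m f" "0 < \<beta>"
  shows "\<beta> \<le> zext (Xpow m) f (fprod m us) x \<longleftrightarrow> (\<exists>z\<in>Pset m us \<beta>. f z = x)"
proof
  have bd: "bdd_above (fprod m us ` S)" for S using fprod_le[OF assms(1,2)] by (intro bdd_aboveI2) auto
  assume "\<exists>z\<in>Pset m us \<beta>. f z = x"
  then obtain z where z: "z \<in> Pset m us \<beta>" "f z = x" by blast
  have zX: "z \<in> Xpow m" using z unfolding Pset_def by auto
  have "\<forall>i<m. \<beta> \<le> (us ! i) (z ! i)" using z(1) Pset_pos[of \<beta> m us] assms(4) by auto
  hence "\<beta> \<le> fprod m us z" using fprod_ge[OF assms(1)] by blast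
  also have "fprod m us z \<le> (SUP z\<in>{z \<in> Xpow m. f z = x}. fprod m us z)"
    by (rule cSUP_upper) (use z zX bd in auto)
  finally show "\<beta> \<le> zext (Xpow m) f (fprod m us) x" using z zX unfolding zext_def by auto
next
  have bd: "bdd_above (fprod m us ` S)" for S using fprod_le[OF assms(1,2)] by (intro bdd_aboveI2) auto
  assume ge: "\<beta> \<le> zext (Xpow m) f (fprod m us) x"
  have xin: "x \<in> f ` Xpow m" using ge assms(4) unfolding zext_def by (cases "x \<in> f ` Xpow m") auto
  let ?S = "{z \<in> Xpow m. f z = x}"
  have ne: "?S \<noteq> {}" using xin by auto
  have ge': "\<beta> \<le> (SUP z\<in>?S. fprod m us z)" using ge xin unfolding zext_def by simp
  define t where "t k = \<beta> - \<beta> / real (k + 2)" for k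
  have tpos: "0 < t k" for k using assms(4) unfolding t_def by (simp add: field_simps add_pos_nonneg)
  have tlt: "t k < \<beta>" for k using assms(4) unfolding t_def by simp
  have "\<exists>z. z \<in> ?S \<and> t k < fprod m us z" for k
  proof -
    have "t k < (SUP z\<in>?S. fprod m us z)" using tlt[of k] ge' by linarith
    thus ?thesis using less_cSUP_iff[OF ne bd] by blast
  qed
  hence "\<exists>z. \<forall>k. z k \<in> ?S \<and> t k < fprod m us (z k)" by (rule choice[OF allI])
  then obtain z where z: "\<And>k. z k \<in> ?S" "\<And>k. t k < fprod m us (z k)" by blast
  have zi: "t k < (us ! i) (z k ! i)" if "i < m" for k i
  proof -
    have "\<forall>i<m. fprod m us (z k) \<le> (us ! i) (z k ! i)" using fprod_ge[OF assms(1), of "fprod m us (z k)" us "z k"] by simp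
    thus ?thesis using z(2)[of k] that by fastforce
  qed
  have lev0: "z k ! i \<in> level (us ! i) 0" if "i < m" for k i
  proof -
    have "z k ! i \<in> {y. 0 < (us ! i) y}" using zi[OF that, of k] tpos[of k] by simp
    thus ?thesis using closure_subset[of "{y. 0 < (us ! i) y}"] unfolding level_def by auto
  qed
  obtain r L where rL: "strict_mono r" "length L = m" "\<forall>i<m. L ! i \<in> level (us ! i) 0"
      "\<forall>i<m. (\<lambda>k. z (r k) ! i) \<longlonglongrightarrow> L ! i"
  proof -
    have "\<forall>k. length (z k) = m" using z(1) unfolding Xpow_def by auto
    moreover have "\<forall>k i. i < m \<longrightarrow> z k ! i \<in> level (us ! i) 0" using lev0 by blast
    moreover have "\<forall>i<m. compact (level (us ! i) 0)" using FstarD(5) assms(2) by blast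
    ultimately show ?thesis using list_seq_compact[of z m "\<lambda>i. level (us ! i) 0"] that by blast
  qed
  have LX: "L \<in> Xpow m" using rL(2) by (simp add: Xpow_def)
  have "(\<lambda>k. f (z (r k))) \<longlonglongrightarrow> f L"
    by (rule cont_m_seq[OF assms(1,3)]) (use z(1) LX rL(4) in auto)
  moreover have "(\<lambda>k. f (z (r k))) = (\<lambda>k. x)" using z(1) by auto
  ultimately have "(\<lambda>k. x) \<longlonglongrightarrow> f L" by simp
  hence fL: "f L = x" by (simp add: LIMSEQ_const_iff)
  have "(\<lambda>k. \<beta> / real k) \<longlonglongrightarrow> 0" by (rule lim_const_over_n)
  hence "(\<lambda>k. \<beta> / real (k + 2)) \<longlonglongrightarrow> 0" using LIMSEQ_ignore_initial_segment[of "\<lambda>k. \<beta> / real k" 0 2]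
    by simp
  hence "t \<longlonglongrightarrow> \<beta> - 0" unfolding t_def by (intro tendsto_diff tendsto_const)
  hence tr: "(t \<circ> r) \<longlonglongrightarrow> \<beta>" using rL(1) LIMSEQ_subseq_LIMSEQ by simp
  have "\<beta> \<le> (us ! i) (L ! i)" if i: "i < m" for i
    by (rule usc_limit[of "us ! i" "\<lambda>k. z (r k) ! i" "L ! i" "t \<circ> r"])
       (use FstarD(4) assms(2) i rL(4) tr zi in \<open>auto intro: less_imp_le\<close>)
  hence "L \<in> Pset m us \<beta>" using LX assms(4) Pset_pos[of \<beta> m us] by simp
  thus "\<exists>z\<in>Pset m us \<beta>. f z = x" using fL by blast
qed

definition Bt :: "(nat \<Rightarrow> real \<Rightarrow> real) \<Rightarrow> nat \<Rightarrow> real \<Rightarrow> real" where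
  "Bt \<rho> j \<alpha> = Inf {t \<in> {0..1}. \<alpha> \<le> \<rho> j t}"

lemma admD:
  assumes "admissible n \<rho>" "j < n"
  shows "\<And>t. t \<in> {0..1} \<Longrightarrow> 0 \<le> \<rho> j t" "\<And>t. t \<in> {0..1} \<Longrightarrow> \<rho> j t \<le> 1" "mono_on {0..1} (\<rho> j)"
    "\<And>t. t \<in> {0..<1} \<Longrightarrow> continuous (at t within {t..1}) (\<rho> j)" "\<rho> j 0 = 0"
  using assms unfolding admissible_def by auto

lemma beta_props:
  assumes "admissible n \<rho>" "j < n" "0 < \<alpha>" "\<alpha> \<le> \<rho> j 1"
  shows "0 < Bt \<rho> j \<alpha>" "Bt \<rho> j \<alpha> \<le> 1" "\<And>t. t \<in> {0..1} \<Longrightarrow> \<alpha> \<le> \<rho> j t \<longleftrightarrow> Bt \<rho> j \<alpha> \<le> t"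
proof -
  let ?T = "{t \<in> {0..1}. \<alpha> \<le> \<rho> j t}"
  let ?B = "Bt \<rho> j \<alpha>"
  have T1: "1 \<in> ?T" using assms(4) by simp
  have ne: "?T \<noteq> {}" using T1 by blast
  have bdd: "bdd_below ?T" by (intro bdd_belowI[of _ 0]) auto
  have B1: "?B \<le> 1" unfolding Bt_def using T1 bdd by (rule cInf_lower)
  have B0: "0 \<le> ?B" unfolding Bt_def using ne by (intro cInf_greatest) auto
  have mono: "mono_on {0..1} (\<rho> j)" using admD[OF assms(1,2)] by blast
  have above: "\<alpha> \<le> \<rho> j t" if "?B < t" "t \<le> 1" for t
  proof -
    have "Inf ?T < t" using that(1) unfolding Bt_def .
    hence "\<exists>x\<in>?T. x < t" using cInf_less_iff[OF ne bdd, of t] by simp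
    then obtain t' where t': "t' \<in> ?T" "t' < t" by blast
    have "\<rho> j t' \<le> \<rho> j t" using mono t' that(2) by (intro mono_onD[OF mono]) auto
    thus ?thesis using t' by simp
  qed
  have ab: "\<alpha> \<le> \<rho> j ?B"
  proof (cases "?B = 1")
    case True thus ?thesis using assms(4) by simp
  next
    case False
    hence lt: "?B < 1" using B1 by simp
    have "continuous (at ?B within {?B..1}) (\<rho> j)" using admD(4)[OF assms(1,2)] lt B0 by simp
    hence lim: "(\<rho> j \<longlongrightarrow> \<rho> j ?B) (at_right ?B)"
      unfolding continuous_within at_within_Icc_at_right[OF lt] .
    have "eventually (\<lambda>t. \<alpha> \<le> \<rho> j t) (at_right ?B)"
      unfolding eventually_at_right_field using lt above by (intro exI[of _ 1]) auto
    thus ?thesis using lim by (intro tendsto_lowerbound) auto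
  qed
  have iff: "\<alpha> \<le> \<rho> j t \<longleftrightarrow> ?B \<le> t" if t: "t \<in> {0..1}" for t
  proof
    assume "\<alpha> \<le> \<rho> j t" thus "?B \<le> t" unfolding Bt_def using t bdd by (intro cInf_lower) auto
  next
    assume "?B \<le> t"
    hence "\<rho> j ?B \<le> \<rho> j t" using t B0 B1 by (intro mono_onD[OF mono]) auto
    thus "\<alpha> \<le> \<rho> j t" using ab by simp
  qed
  show "\<And>t. t \<in> {0..1} \<Longrightarrow> \<alpha> \<le> \<rho> j t \<longleftrightarrow> ?B \<le> t" by (rule iff)
  show "?B \<le> 1" by (rule B1)
  show "0 < ?B"
  proof (rule ccontr)
    assume "\<not> 0 < ?B"
    hence "?B = 0" using B0 by simp
    hence "\<alpha> \<le> \<rho> j 0" using iff[of 0] by simp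
    thus False using admD(5)[OF assms(1,2)] assms(3) by simp
  qed
qed



locale gifzs =
  fixes m n :: nat and \<phi> :: "nat \<Rightarrow> 'a::metric_space list \<Rightarrow> 'a" and \<rho> :: "nat \<Rightarrow> real \<Rightarrow> real"
  assumes m1: "m \<ge> 1" and cont: "\<forall>j<n. cont_m m (\<phi> j)" and adm: "admissible n \<rho>"
begin

lemma n_pos: "0 < n"
  using adm unfolding admissible_def by auto

lemma ZS_eq: "ZS m n \<phi> \<rho> us x = Max ((\<lambda>j. \<rho> j (zext (Xpow m) (\<phi> j) (fprod m us) x)) ` {..<n})"
  unfolding ZS_def by simp

lemma ZS_ge:
  assumes us: "\<forall>i<m. us ! i \<in> Fstar" and a: "0 < \<alpha>"
  shows "\<alpha> \<le> ZS m n \<phi> \<rho> us x \<longleftrightarrow> (\<exists>j<n. \<alpha> \<le> \<rho> j 1 \<and> x \<in> \<phi> j ` Pset m us (Bt \<rho> j \<alpha>))"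
proof -
  have one: "\<alpha> \<le> \<rho> j (zext (Xpow m) (\<phi> j) (fprod m us) x) \<longleftrightarrow> (\<alpha> \<le> \<rho> j 1 \<and> x \<in> \<phi> j ` Pset m us (Bt \<rho> j \<alpha>))"
    if j: "j < n" for j
  proof -
    let ?s = "zext (Xpow m) (\<phi> j) (fprod m us) x"
    have s: "0 \<le> ?s" "?s \<le> 1" using zext_range[OF m1 us, of "\<phi> j" x] by auto
    have mono: "mono_on {0..1} (\<rho> j)" using admD(3)[OF adm j] .
    have cj: "cont_m m (\<phi> j)" using cont j by blast
    show ?thesis
    proof
      assume h: "\<alpha> \<le> \<rho> j ?s"
      have "\<rho> j ?s \<le> \<rho> j 1" using s by (intro mono_onD[OF mono]) auto
      hence r1: "\<alpha> \<le> \<rho> j 1" using h by simp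
      have "Bt \<rho> j \<alpha> \<le> ?s" using beta_props(3)[OF adm j a r1, of ?s] s h by simp
      hence "\<exists>z\<in>Pset m us (Bt \<rho> j \<alpha>). \<phi> j z = x"
        using zext_ge[OF m1 us cj beta_props(1)[OF adm j a r1]] by blast
      thus "\<alpha> \<le> \<rho> j 1 \<and> x \<in> \<phi> j ` Pset m us (Bt \<rho> j \<alpha>)" using r1 by blast
    next
      assume h: "\<alpha> \<le> \<rho> j 1 \<and> x \<in> \<phi> j ` Pset m us (Bt \<rho> j \<alpha>)"
      hence "Bt \<rho> j \<alpha> \<le> ?s" using zext_ge[OF m1 us cj beta_props(1)[OF adm j a]] by blast
      thus "\<alpha> \<le> \<rho> j ?s" using beta_props(3)[OF adm j a, of ?s] h s by simp
    qed
  qed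
  have "\<alpha> \<le> ZS m n \<phi> \<rho> us x \<longleftrightarrow> (\<exists>j\<in>{..<n}. \<alpha> \<le> \<rho> j (zext (Xpow m) (\<phi> j) (fprod m us) x))"
    unfolding ZS_eq using n_pos by (subst Max_ge_iff) auto
  also have "\<dots> \<longleftrightarrow> (\<exists>j<n. \<alpha> \<le> \<rho> j 1 \<and> x \<in> \<phi> j ` Pset m us (Bt \<rho> j \<alpha>))" using one by auto
  finally show ?thesis .
qed

lemma ZS_range:
  assumes us: "\<forall>i<m. us ! i \<in> Fstar"
  shows "0 \<le> ZS m n \<phi> \<rho> us x" "ZS m n \<phi> \<rho> us x \<le> 1"
proof -
  have r: "0 \<le> \<rho> j (zext (Xpow m) (\<phi> j) (fprod m us) x) \<and> \<rho> j (zext (Xpow m) (\<phi> j) (fprod m us) x) \<le> 1"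
    if "j < n" for j
    using admD(1,2)[OF adm that] zext_range[OF m1 us, of "\<phi> j" x] by simp
  have ne: "(\<lambda>j. \<rho> j (zext (Xpow m) (\<phi> j) (fprod m us) x)) ` {..<n} \<noteq> {}" using n_pos by auto
  show "0 \<le> ZS m n \<phi> \<rho> us x" unfolding ZS_eq using r n_pos
    by (subst Max_ge_iff) auto
  show "ZS m n \<phi> \<rho> us x \<le> 1" unfolding ZS_eq using r ne by (subst Max_le_iff) auto
qed

lemma ZS_level:
  assumes us: "\<forall>i<m. us ! i \<in> Fstar" and a: "0 < \<alpha>"
  shows "level (ZS m n \<phi> \<rho> us) \<alpha> = (\<Union>j\<in>{j. j < n \<and> \<alpha> \<le> \<rho> j 1}. \<phi> j ` Pset m us (Bt \<rho> j \<alpha>))"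
  using ZS_ge[OF us a] a by (auto simp: level_pos)

lemma Pset_ne:
  assumes us: "\<forall>i<m. us ! i \<in> Fstar" and b: "\<beta> \<le> 1"
  shows "Pset m us \<beta> \<noteq> {}"
proof -
  have "\<forall>i<m. \<exists>y. y \<in> level (us ! i) \<beta>" using level_ne us b by blast
  then obtain g where g: "\<forall>i<m. g i \<in> level (us ! i) \<beta>" by metis
  have "map g [0..<m] \<in> Pset m us \<beta>" using g unfolding Pset_def Xpow_def by auto
  thus ?thesis by blast
qed

lemma ZS_level_compact:
  assumes us: "\<forall>i<m. us ! i \<in> Fstar" and a: "0 < \<alpha>"
  shows "compact (level (ZS m n \<phi> \<rho> us) \<alpha>)"
proof -
  have "compact (\<phi> j ` Pset m us (Bt \<rho> j \<alpha>))" if "j \<in> {j. j < n \<and> \<alpha> \<le> \<rho> j 1}" for j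
    using image_Pset_compact[OF m1 _ us] cont beta_props(1)[OF adm _ a] that by (simp add: less_imp_le)
  thus ?thesis unfolding ZS_level[OF us a] by (intro compact_UN) auto
qed

end



context gifzs
begin

lemma Pset_mono: "0 \<le> \<beta> \<Longrightarrow> \<beta> \<le> \<beta>' \<Longrightarrow> Pset m us \<beta>' \<subseteq> Pset m us \<beta>"
  unfolding Pset_def using level_mono by blast

lemma ZS_Fstar:
  assumes us: "\<forall>i<m. us ! i \<in> Fstar"
  shows "ZS m n \<phi> \<rho> us \<in> Fstar"
proof -
  let ?w = "ZS m n \<phi> \<rho> us"
  have rng: "\<forall>x. 0 \<le> ?w x \<and> ?w x \<le> 1" using ZS_range[OF us] by auto
  obtain j0 where j0: "j0 < n" "\<rho> j0 1 = 1" using adm unfolding admissible_def by blast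
  have "Bt \<rho> j0 1 \<le> 1" using beta_props(2)[OF adm j0(1)] j0(2) by simp
  then obtain z where z: "z \<in> Pset m us (Bt \<rho> j0 1)" using Pset_ne[OF us] by blast
  have "1 \<le> ?w (\<phi> j0 z)" using ZS_ge[OF us, of 1] j0 z by auto
  hence norm: "\<exists>x. ?w x = 1" using rng by (meson order_antisym)
  have usc: "usc ?w"
  proof (rule closed_levels_usc)
    fix \<alpha> :: real assume "0 < \<alpha>" "\<alpha> \<le> 1"
    hence "compact (level ?w \<alpha>)" using ZS_level_compact[OF us] by blast
    thus "closed {x. \<alpha> \<le> ?w x}" using \<open>0 < \<alpha>\<close> level_pos[of \<alpha> ?w] compact_imp_closed by auto
  qed (use rng in auto)
  let ?K = "\<Union>j\<in>{..<n}. \<phi> j ` Pset m us 0"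
  have K: "compact ?K" using image_Pset_compact[OF m1 _ us] cont by (intro compact_UN) auto
  have "{x. 0 < ?w x} \<subseteq> ?K"
  proof
    fix x assume "x \<in> {x. 0 < ?w x}"
    hence x: "0 < ?w x" by simp
    then obtain j where j: "j < n" "?w x \<le> \<rho> j 1" "x \<in> \<phi> j ` Pset m us (Bt \<rho> j (?w x))"
      using ZS_ge[OF us x, of x] by auto
    have "Pset m us (Bt \<rho> j (?w x)) \<subseteq> Pset m us 0"
      using beta_props(1)[OF adm j(1) x j(2)] by (intro Pset_mono) auto
    thus "x \<in> ?K" using j by blast
  qed
  hence "closure {x. 0 < ?w x} \<subseteq> ?K" using K compact_imp_closed closure_minimal by blast
  hence "level ?w 0 = ?K \<inter> closure {x. 0 < ?w x}" unfolding level_def by auto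
  hence "compact (level ?w 0)" using K by (simp add: compact_Int_closed)
  thus ?thesis using rng norm usc unfolding Fstar_def by blast
qed

definition Dm :: "('a \<Rightarrow> real) list \<Rightarrow> ('a \<Rightarrow> real) list \<Rightarrow> real" where
  "Dm us vs = (MAX i\<in>{..<m}. d_inf (us ! i) (vs ! i))"

lemma Dm_ge: "i < m \<Longrightarrow> d_inf (us ! i) (vs ! i) \<le> Dm us vs"
  unfolding Dm_def by (intro Max_ge) auto

lemma Dm_sym: "Dm us vs = Dm vs us"
  unfolding Dm_def using dinf_sym by metis

lemma Dm_nonneg: "\<forall>i<m. us ! i \<in> Fstar \<Longrightarrow> \<forall>i<m. vs ! i \<in> Fstar \<Longrightarrow> 0 \<le> Dm us vs"
  using Dm_ge[of 0 us vs] dinf_nonneg m1 by fastforce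

lemma dmax_nonneg: "0 \<le> dmax m x y"
proof -
  have "dist (x ! 0) (y ! 0) \<le> dmax m x y" unfolding dmax_def using m1 by (intro Max_ge) auto
  thus ?thesis using zero_le_dist order_trans by blast
qed

lemma one_side:
  assumes us: "\<forall>i<m. us ! i \<in> Fstar" and vs: "\<forall>i<m. vs ! i \<in> Fstar"
    and b: "0 \<le> \<beta>" "\<beta> \<le> 1" and z: "z \<in> Pset m us \<beta>"
  shows "\<exists>w\<in>Pset m vs \<beta>. dmax m z w \<le> Dm us vs"
proof -
  have "\<exists>y. y \<in> level (vs ! i) \<beta> \<and> dist (z ! i) y \<le> Dm us vs" if i: "i < m" for i
  proof -
    have bi: "\<beta> \<in> {0..1}" using b by simp
    obtain y where y: "y \<in> level (vs ! i) \<beta>" "infdist (z ! i) (level (vs ! i) \<beta>) = dist (z ! i) y"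
      using infdist_attains[OF lev_facts[OF vs[rule_format, OF i] bi]] by blast
    have "z ! i \<in> level (us ! i) \<beta>" using z i unfolding Pset_def by auto
    hence "infdist (z ! i) (level (vs ! i) \<beta>) \<le> hausdorff (level (us ! i) \<beta>) (level (vs ! i) \<beta>)"
      using hausdorff_ge(1) lev_facts[OF us[rule_format, OF i] bi] lev_facts[OF vs[rule_format, OF i] bi] by blast
    also have "\<dots> \<le> d_inf (us ! i) (vs ! i)" using hausdorff_le_dinf us vs i bi by blast
    also have "\<dots> \<le> Dm us vs" using Dm_ge i .
    finally show ?thesis using y by auto
  qed
  then obtain g where g: "\<forall>i<m. g i \<in> level (vs ! i) \<beta> \<and> dist (z ! i) (g i) \<le> Dm us vs" by metis
  let ?w = "map g [0..<m]"
  have "?w \<in> Pset m vs \<beta>" using g unfolding Pset_def Xpow_def by auto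
  moreover have "dmax m z ?w \<le> Dm us vs" unfolding dmax_def using m1 g
    by (subst Max_le_iff) (auto simp: lessThan_empty_iff)
  ultimately show ?thesis by blast
qed

lemma half_side:
  assumes us: "\<forall>i<m. us ! i \<in> Fstar" and vs: "\<forall>i<m. vs ! i \<in> Fstar"
    and psi: "\<forall>j<n. mono_on {0..} (\<psi> j) \<and> (\<forall>x\<in>Xpow m. \<forall>y\<in>Xpow m. dist (\<phi> j x) (\<phi> j y) \<le> \<psi> j (dmax m x y))"
    and a: "0 < \<alpha>" "\<alpha> \<le> 1"
  shows "\<forall>p\<in>level (ZS m n \<phi> \<rho> us) \<alpha>. infdist p (level (ZS m n \<phi> \<rho> vs) \<alpha>) \<le> Max ((\<lambda>j. \<psi> j (Dm us vs)) ` {..<n})"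
proof
  fix p assume "p \<in> level (ZS m n \<phi> \<rho> us) \<alpha>"
  then obtain j z where j: "j < n" "\<alpha> \<le> \<rho> j 1" and z: "z \<in> Pset m us (Bt \<rho> j \<alpha>)" and p: "p = \<phi> j z"
    unfolding ZS_level[OF us a(1)] by blast
  have B: "0 \<le> Bt \<rho> j \<alpha>" "Bt \<rho> j \<alpha> \<le> 1" using beta_props(1,2)[OF adm j(1) a(1) j(2)] by auto
  obtain w where w: "w \<in> Pset m vs (Bt \<rho> j \<alpha>)" "dmax m z w \<le> Dm us vs" using one_side[OF us vs B z] by blast
  have wl: "\<phi> j w \<in> level (ZS m n \<phi> \<rho> vs) \<alpha>" unfolding ZS_level[OF vs a(1)] using j w by blast
  have zX: "z \<in> Xpow m" "w \<in> Xpow m" using z w unfolding Pset_def by auto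
  have "dist p (\<phi> j w) \<le> \<psi> j (dmax m z w)" using psi j zX p by blast
  also have "\<dots> \<le> \<psi> j (Dm us vs)" using psi j w(2) dmax_nonneg Dm_nonneg[OF us vs]
    by (intro mono_onD[of "{0..}" "\<psi> j"]) auto
  also have "\<dots> \<le> Max ((\<lambda>j. \<psi> j (Dm us vs)) ` {..<n})" using j by (intro Max_ge) auto
  finally show "infdist p (level (ZS m n \<phi> \<rho> vs) \<alpha>) \<le> Max ((\<lambda>j. \<psi> j (Dm us vs)) ` {..<n})"
    using wl by (meson infdist_le2)
qed

lemma contraction:
  assumes us: "\<forall>i<m. us ! i \<in> Fstar" and vs: "\<forall>i<m. vs ! i \<in> Fstar"
    and psi: "\<forall>j<n. mono_on {0..} (\<psi> j) \<and> (\<forall>x\<in>Xpow m. \<forall>y\<in>Xpow m. dist (\<phi> j x) (\<phi> j y) \<le> \<psi> j (dmax m x y))"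
  shows "d_inf (ZS m n \<phi> \<rho> us) (ZS m n \<phi> \<rho> vs) \<le> Max ((\<lambda>j. \<psi> j (Dm us vs)) ` {..<n})"
proof (rule level0_bound[OF ZS_Fstar[OF us] ZS_Fstar[OF vs]])
  fix \<alpha> :: real assume a: "0 < \<alpha>" "\<alpha> \<le> 1"
  have ai: "\<alpha> \<in> {0..1}" using a by simp
  show "hausdorff (level (ZS m n \<phi> \<rho> us) \<alpha>) (level (ZS m n \<phi> \<rho> vs) \<alpha>) \<le> Max ((\<lambda>j. \<psi> j (Dm us vs)) ` {..<n})"
    unfolding hausdorff_le_iff[OF lev_facts(1)[OF ZS_Fstar[OF us] ai] lev_facts(1)[OF ZS_Fstar[OF vs] ai]
      lev_facts(2)[OF ZS_Fstar[OF us] ai] lev_facts(2)[OF ZS_Fstar[OF vs] ai]]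
    using half_side[OF us vs psi a] half_side[OF vs us psi a] Dm_sym[of us vs] by simp
qed

end



definition Klim :: "(nat \<Rightarrow> 'a::metric_space set) \<Rightarrow> 'a set" where
  "Klim A = {x. (\<lambda>k. infdist x (A k)) \<longlonglongrightarrow> 0}"

lemma Klim_a:
  fixes A :: "nat \<Rightarrow> 'a::metric_space set"
  assumes cA: "\<forall>k. compact (A k) \<and> A k \<noteq> {}"
    and N: "\<forall>p\<ge>N. \<forall>q\<ge>N. hausdorff (A p) (A q) \<le> e"
    and x: "x \<in> Klim A" and k: "k \<ge> N"
  shows "infdist x (A k) \<le> e"
proof -
  have lim: "(\<lambda>q. infdist x (A q) + e) \<longlonglongrightarrow> 0 + e"
    using x unfolding Klim_def by (intro tendsto_add tendsto_const) auto
  have "eventually (\<lambda>q. infdist x (A k) \<le> infdist x (A q) + e) sequentially"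
    unfolding eventually_sequentially
  proof (intro exI[of _ N] allI impI)
    fix q assume q: "N \<le> q"
    have "infdist x (A k) \<le> infdist x (A q) + hausdorff (A q) (A k)"
      by (rule infdist_le_hausdorff) (use cA in auto)
    also have "hausdorff (A q) (A k) \<le> e" using N q k by auto
    finally show "infdist x (A k) \<le> infdist x (A q) + e" by simp
  qed
  hence "infdist x (A k) \<le> 0 + e" using lim by (intro tendsto_lowerbound) auto
  thus ?thesis by simp
qed

lemma pow2_small:
  assumes "0 < (\<epsilon>::real)"
  shows "\<exists>J::nat. c / 2 ^ J < \<epsilon>"
proof -
  have "(\<lambda>j. c / 2 ^ j) \<longlonglongrightarrow> 0" by (rule LIMSEQ_divide_realpow_zero) simp
  hence "eventually (\<lambda>j. dist (c / 2 ^ j) 0 < \<epsilon>) sequentially" using assms by (rule tendstoD)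
  then obtain J where "\<forall>j\<ge>J. dist (c / 2 ^ j) 0 < \<epsilon>" by (auto simp: eventually_sequentially)
  hence "dist (c / 2 ^ J) 0 < \<epsilon>" by simp
  moreover have "c / 2 ^ J \<le> dist (c / 2 ^ J) 0" unfolding dist_real_def using divide_right_mono[OF abs_ge_self[of c], of "2 ^ J"] by simp
  ultimately have "c / 2 ^ J < \<epsilon>" by linarith
  thus ?thesis by blast
qed

lemma Klim_b:
  fixes A :: "nat \<Rightarrow> 'a::complete_space set"
  assumes cA: "\<forall>k. compact (A k) \<and> A k \<noteq> {}"
    and cauchy: "\<forall>e>0. \<exists>N. \<forall>p\<ge>N. \<forall>q\<ge>N. hausdorff (A p) (A q) \<le> e"
    and e: "0 < e" and N: "\<forall>p\<ge>N. \<forall>q\<ge>N. hausdorff (A p) (A q) \<le> e"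
    and k: "k \<ge> N" and a: "a \<in> A k"
  shows "\<exists>l\<in>Klim A. dist a l \<le> 2 * e"
proof -
  have "\<forall>j. \<exists>N'. \<forall>p\<ge>N'. \<forall>q\<ge>N'. hausdorff (A p) (A q) \<le> e / 2 ^ Suc j"
    using cauchy e by simp
  then obtain Nf where Nf: "\<And>j p q. p \<ge> Nf j \<Longrightarrow> q \<ge> Nf j \<Longrightarrow> hausdorff (A p) (A q) \<le> e / 2 ^ Suc j"
    by metis
  define M where "M = rec_nat k (\<lambda>j Mj. max Mj (Nf j))"
  have M0: "M 0 = k" and MS: "M (Suc j) = max (M j) (Nf j)" for j unfolding M_def by simp_all
  have Mk: "k \<le> M j" for j by (induction j) (auto simp: M0 MS)
  have Mmono: "M j \<le> M (j + p)" for j p by (induction p) (auto simp: MS)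
  have step: "hausdorff (A (M j)) (A (M (Suc j))) \<le> e / 2 ^ j" for j
  proof (cases j)
    case 0 thus ?thesis using N Mk k by (simp add: M0 MS)
  next
    case (Suc i)
    have "M j \<ge> Nf i" using Suc by (simp add: MS)
    moreover have "M (Suc j) \<ge> M j" by (simp add: MS)
    ultimately show ?thesis using Nf[of i "M j" "M (Suc j)"] Suc by simp
  qed
  have ex_next: "\<exists>b'. b' \<in> A (M (Suc j)) \<and> dist b b' \<le> e / 2 ^ j" if "b \<in> A (M j)" for b j
  proof -
    obtain b' where b': "b' \<in> A (M (Suc j))" "infdist b (A (M (Suc j))) = dist b b'"
      using infdist_attains[of "A (M (Suc j))" b] cA by auto
    have "infdist b (A (M (Suc j))) \<le> hausdorff (A (M j)) (A (M (Suc j)))"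
      by (rule hausdorff_ge(1)) (use cA that in auto)
    thus ?thesis using b' step[of j] by auto
  qed
  define pt where "pt = rec_nat a (\<lambda>j b. SOME b'. b' \<in> A (M (Suc j)) \<and> dist b b' \<le> e / 2 ^ j)"
  have pt0: "pt 0 = a" and ptS: "pt (Suc j) = (SOME b'. b' \<in> A (M (Suc j)) \<and> dist (pt j) b' \<le> e / 2 ^ j)" for j
    unfolding pt_def by simp_all
  have ptA: "pt j \<in> A (M j)" for j
  proof (induction j)
    case 0 thus ?case using a by (simp add: pt0 M0)
  next
    case (Suc j)
    from someI_ex[OF ex_next[OF Suc]] show ?case by (simp add: ptS)
  qed
  have ptd: "dist (pt j) (pt (Suc j)) \<le> e / 2 ^ j" for j
    using someI_ex[OF ex_next[OF ptA[of j]]] by (simp add: ptS)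
  have ptdist: "dist (pt j) (pt (j + p)) \<le> 2 * e / 2 ^ j - 2 * e / 2 ^ (j + p)" for j p
  proof (induction p)
    case 0 thus ?case by simp
  next
    case (Suc p)
    have "dist (pt j) (pt (j + Suc p)) \<le> dist (pt j) (pt (j + p)) + dist (pt (j + p)) (pt (Suc (j + p)))"
      by (simp add: dist_triangle)
    also have "\<dots> \<le> 2 * e / 2 ^ j - 2 * e / 2 ^ (j + p) + e / 2 ^ (j + p)" using Suc ptd[of "j + p"] by simp
    also have "\<dots> = 2 * e / 2 ^ j - 2 * e / 2 ^ (j + Suc p)" by (simp add: field_simps)
    finally show ?case .
  qed
  have ptdist': "dist (pt j) (pt (j + p)) \<le> 2 * e / 2 ^ j" for j p
  proof -
    have "0 \<le> 2 * e / 2 ^ (j + p)" using e by simp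
    thus ?thesis using ptdist[of j p] by linarith
  qed
  have "Cauchy pt"
  proof (rule metric_CauchyI)
    fix \<epsilon> :: real assume \<epsilon>: "0 < \<epsilon>"
    obtain J where J: "4 * e / 2 ^ J < \<epsilon>" using pow2_small[OF \<epsilon>] by blast
    show "\<exists>M. \<forall>m\<ge>M. \<forall>n\<ge>M. dist (pt m) (pt n) < \<epsilon>"
    proof (intro exI[of _ J] allI impI)
      fix p q assume "J \<le> p" "J \<le> q"
      then obtain p' q' where pq: "p = J + p'" "q = J + q'" by (metis le_add_diff_inverse)
      have "dist (pt p) (pt q) \<le> dist (pt J) (pt p) + dist (pt J) (pt q)" by (rule dist_triangle3)
      also have "\<dots> \<le> 4 * e / 2 ^ J" using ptdist'[of J p'] ptdist'[of J q'] pq by simp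
      finally show "dist (pt p) (pt q) < \<epsilon>" using J by simp
    qed
  qed
  then obtain l where l: "pt \<longlonglongrightarrow> l" using Cauchy_convergent_iff convergent_def by blast
  have dl: "dist (pt j) l \<le> 2 * e / 2 ^ j" for j
  proof -
    have "(\<lambda>p. dist (pt j) (pt (j + p))) \<longlonglongrightarrow> dist (pt j) l"
      using LIMSEQ_ignore_initial_segment[OF l, of j] by (intro tendsto_dist tendsto_const) (simp add: add.commute)
    thus ?thesis using ptdist' by (intro tendsto_upperbound) auto
  qed
  have lK: "l \<in> Klim A" unfolding Klim_def mem_Collect_eq
  proof (rule tendstoI)
    fix \<epsilon> :: real assume \<epsilon>: "0 < \<epsilon>"
    obtain J where J: "4 * e / 2 ^ J < \<epsilon>" using pow2_small[OF \<epsilon>] by blast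
    show "eventually (\<lambda>q. dist (infdist l (A q)) 0 < \<epsilon>) sequentially"
      unfolding eventually_sequentially
    proof (intro exI[of _ "M (Suc J)"] allI impI)
      fix q assume q: "M (Suc J) \<le> q"
      have "infdist l (A q) \<le> infdist (pt (Suc J)) (A q) + dist l (pt (Suc J))" by (rule infdist_triangle)
      also have "infdist (pt (Suc J)) (A q) \<le> hausdorff (A (M (Suc J))) (A q)"
        by (rule hausdorff_ge(1)) (use cA ptA in auto)
      also have "hausdorff (A (M (Suc J))) (A q) \<le> e / 2 ^ Suc J"
        using Nf[of J "M (Suc J)" q] q by (simp add: MS)
      also have "dist l (pt (Suc J)) \<le> 2 * e / 2 ^ Suc J" using dl[of "Suc J"] by (simp add: dist_commute)
      finally have "infdist l (A q) \<le> 3 * e / 2 ^ Suc J" by simp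
      also have "\<dots> < 4 * e / 2 ^ J" using e by (simp add: field_simps)
      finally show "dist (infdist l (A q)) 0 < \<epsilon>" using J infdist_nonneg[of l "A q"] by simp
    qed
  qed
  moreover have "dist a l \<le> 2 * e" using dl[of 0] by (simp add: pt0)
  ultimately show ?thesis by blast
qed



lemma Klim_closed:
  fixes A :: "nat \<Rightarrow> 'a::metric_space set"
  shows "closed (Klim A)"
  unfolding closed_sequential_limits
proof (intro allI impI, elim conjE)
  fix x :: "nat \<Rightarrow> 'a" and l assume x: "\<forall>n. x n \<in> Klim A" and l: "x \<longlonglongrightarrow> l"
  show "l \<in> Klim A" unfolding Klim_def mem_Collect_eq
  proof (rule tendstoI)
    fix \<epsilon> :: real assume \<epsilon>: "0 < \<epsilon>"
    have "eventually (\<lambda>n. dist (x n) l < \<epsilon> / 2) sequentially" using l \<epsilon> by (intro tendstoD) auto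
    then obtain n0 where "\<forall>n\<ge>n0. dist (x n) l < \<epsilon> / 2" by (auto simp: eventually_sequentially)
    then obtain n where n: "dist (x n) l < \<epsilon> / 2" by blast
    have "(\<lambda>k. infdist (x n) (A k)) \<longlonglongrightarrow> 0" using x unfolding Klim_def by auto
    hence "eventually (\<lambda>k. dist (infdist (x n) (A k)) 0 < \<epsilon> / 2) sequentially" using \<epsilon> by (intro tendstoD) auto
    thus "eventually (\<lambda>k. dist (infdist l (A k)) 0 < \<epsilon>) sequentially"
    proof eventually_elim
      case (elim k)
      have "infdist l (A k) \<le> infdist (x n) (A k) + dist l (x n)" by (rule infdist_triangle)
      moreover have "infdist (x n) (A k) < \<epsilon> / 2" using elim infdist_nonneg[of "x n" "A k"] by (simp add: dist_real_def)
      ultimately show ?case using n infdist_nonneg[of l "A k"] by (simp add: dist_real_def dist_commute)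
    qed
  qed
qed

lemma Klim_compact:
  fixes A :: "nat \<Rightarrow> 'a::complete_space set"
  assumes cA: "\<forall>k. compact (A k) \<and> A k \<noteq> {}"
    and cauchy: "\<forall>e>0. \<exists>N. \<forall>p\<ge>N. \<forall>q\<ge>N. hausdorff (A p) (A q) \<le> e"
  shows "compact (Klim A)"
  unfolding compact_eq_totally_bounded
proof (intro conjI allI impI)
  show "complete (Klim A)" using Klim_closed complete_eq_closed by blast
  fix \<epsilon> :: real assume \<epsilon>: "0 < \<epsilon>"
  obtain N where N: "\<forall>p\<ge>N. \<forall>q\<ge>N. hausdorff (A p) (A q) \<le> \<epsilon> / 3" using cauchy \<epsilon> by (meson divide_pos_pos zero_less_numeral)
  have "compact (A N)" using cA by blast
  then obtain c where c: "finite c" "A N \<subseteq> (\<Union>x\<in>c. ball x (\<epsilon> / 3))"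
    unfolding compact_eq_totally_bounded using \<epsilon> by (meson divide_pos_pos zero_less_numeral)
  have "Klim A \<subseteq> (\<Union>x\<in>c. ball x \<epsilon>)"
  proof
    fix x assume x: "x \<in> Klim A"
    have "infdist x (A N) \<le> \<epsilon> / 3" using Klim_a[OF cA N x] by simp
    moreover obtain b where b: "b \<in> A N" "infdist x (A N) = dist x b" using infdist_attains[of "A N" x] cA by auto
    ultimately have d1: "dist b x \<le> \<epsilon> / 3" by (simp add: dist_commute)
    obtain y where y: "y \<in> c" "b \<in> ball y (\<epsilon> / 3)" using b(1) c(2) by blast
    have d2: "dist y b < \<epsilon> / 3" using y(2) by simp
    have "dist y x \<le> dist y b + dist b x" by (rule dist_triangle)
    hence "dist y x < \<epsilon>" using d1 d2 \<epsilon> by linarith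
    thus "x \<in> (\<Union>x\<in>c. ball x \<epsilon>)" using y(1) by auto
  qed
  thus "\<exists>k. finite k \<and> Klim A \<subseteq> (\<Union>x\<in>k. ball x \<epsilon>)" using c(1) by blast
qed

lemma lev_lim:
  fixes u :: "'a::metric_space \<Rightarrow> real"
  assumes u: "u \<in> Fstar" and a: "0 < \<alpha>" "\<alpha> \<le> 1"
    and h: "\<And>\<beta>. 0 < \<beta> \<Longrightarrow> \<beta> < \<alpha> \<Longrightarrow> infdist x (level u \<beta>) \<le> e"
  shows "infdist x (level u \<alpha>) \<le> e"
proof -
  define t where "t k = \<alpha> - \<alpha> / real (k + 2)" for k
  have tpos: "0 < t k" for k using a unfolding t_def by (simp add: field_simps add_pos_nonneg)
  have tlt: "t k < \<alpha>" for k using a unfolding t_def by simp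
  have "\<exists>p. p \<in> level u (t k) \<and> dist x p \<le> e" for k
  proof -
    have ti: "t k \<in> {0..1}" using tpos[of k] tlt[of k] a by simp
    obtain p where p: "p \<in> level u (t k)" "infdist x (level u (t k)) = dist x p"
      using infdist_attains[OF lev_facts[OF u ti]] by blast
    thus ?thesis using h[OF tpos[of k] tlt[of k]] by auto
  qed
  hence "\<exists>p. \<forall>k. p k \<in> level u (t k) \<and> dist x (p k) \<le> e" by (rule choice[OF allI])
  then obtain p where p: "\<And>k. p k \<in> level u (t k)" "\<And>k. dist x (p k) \<le> e" by blast
  have p0: "\<forall>k. p k \<in> level u 0" using p(1) level_sub0[OF tpos] by blast
  have "seq_compact (level u 0)" using FstarD(5)[OF u] compact_imp_seq_compact by blast
  then obtain q r where qr: "q \<in> level u 0" "strict_mono r" "(p \<circ> r) \<longlonglongrightarrow> q"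
    using p0 by (rule seq_compactE)
  have "(\<lambda>k. \<alpha> / real k) \<longlonglongrightarrow> 0" by (rule lim_const_over_n)
  hence "(\<lambda>k. \<alpha> / real (k + 2)) \<longlonglongrightarrow> 0" using LIMSEQ_ignore_initial_segment[of "\<lambda>k. \<alpha> / real k" 0 2]
    by simp
  hence "t \<longlonglongrightarrow> \<alpha> - 0" unfolding t_def by (intro tendsto_diff tendsto_const)
  hence tr: "(t \<circ> r) \<longlonglongrightarrow> \<alpha>" using qr(2) LIMSEQ_subseq_LIMSEQ by simp
  have tu: "\<forall>k. (t \<circ> r) k \<le> u ((p \<circ> r) k)"
  proof
    fix k
    have "t (r k) \<noteq> 0" using tpos[of "r k"] by simp
    thus "(t \<circ> r) k \<le> u ((p \<circ> r) k)" using p(1)[of "r k"] level_pos[of "t (r k)" u] by simp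
  qed
  have "\<alpha> \<le> u q" by (rule usc_limit[OF FstarD(4)[OF u] qr(3) tr tu])
  hence ql: "q \<in> level u \<alpha>" using a level_pos[of \<alpha> u] by simp
  have "(\<lambda>k. dist x ((p \<circ> r) k)) \<longlonglongrightarrow> dist x q" using qr(3) by (intro tendsto_dist tendsto_const)
  hence "dist x q \<le> e" using p(2) by (intro tendsto_upperbound) auto
  thus ?thesis using ql by (meson infdist_le2)
qed



lemma Fstar_complete:
  fixes u :: "nat \<Rightarrow> ('a::complete_space \<Rightarrow> real)"
  assumes u: "\<forall>k. u k \<in> Fstar" and cau: "\<forall>e>0. \<exists>N. \<forall>p\<ge>N. \<forall>q\<ge>N. d_inf (u p) (u q) \<le> e"
  shows "\<exists>v\<in>Fstar. (\<lambda>k. d_inf (u k) v) \<longlonglongrightarrow> 0"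
proof -
  define L where "L \<alpha> = Klim (\<lambda>k. level (u k) \<alpha>)" for \<alpha>
  have cA: "\<forall>k. compact (level (u k) \<alpha>) \<and> level (u k) \<alpha> \<noteq> {}" if "\<alpha> \<in> {0..1}" for \<alpha>
    using lev_facts[OF u[rule_format] that] by blast
  have hN: "\<forall>p\<ge>N. \<forall>q\<ge>N. hausdorff (level (u p) \<alpha>) (level (u q) \<alpha>) \<le> e"
    if "\<forall>p\<ge>N. \<forall>q\<ge>N. d_inf (u p) (u q) \<le> e" "\<alpha> \<in> {0..1}" for N e \<alpha>
  proof (intro allI impI)
    fix p q assume "N \<le> p" "N \<le> q"
    hence "d_inf (u p) (u q) \<le> e" using that(1) by blast
    moreover have "hausdorff (level (u p) \<alpha>) (level (u q) \<alpha>) \<le> d_inf (u p) (u q)"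
      using hausdorff_le_dinf[OF u[rule_format] u[rule_format] that(2)] .
    ultimately show "hausdorff (level (u p) \<alpha>) (level (u q) \<alpha>) \<le> e" by linarith
  qed
  have cauA: "\<forall>e>0. \<exists>N. \<forall>p\<ge>N. \<forall>q\<ge>N. hausdorff (level (u p) \<alpha>) (level (u q) \<alpha>) \<le> e"
    if "\<alpha> \<in> {0..1}" for \<alpha>
  proof (intro allI impI)
    fix e :: real assume "0 < e"
    then obtain N where "\<forall>p\<ge>N. \<forall>q\<ge>N. d_inf (u p) (u q) \<le> e" using cau by blast
    thus "\<exists>N. \<forall>p\<ge>N. \<forall>q\<ge>N. hausdorff (level (u p) \<alpha>) (level (u q) \<alpha>) \<le> e" using hN that by blast
  qed
  have Lcomp: "compact (L \<alpha>)" if "\<alpha> \<in> {0..1}" for \<alpha>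
    unfolding L_def using Klim_compact[OF cA[OF that] cauA[OF that]] .
  obtain N1 where N1: "\<forall>p\<ge>N1. \<forall>q\<ge>N1. d_inf (u p) (u q) \<le> 1" using cau by (meson zero_less_one)
  have Lne: "L \<alpha> \<noteq> {}" if a: "\<alpha> \<in> {0..1}" for \<alpha>
  proof -
    obtain a where "a \<in> level (u N1) \<alpha>" using cA[OF a] by blast
    then obtain l where "l \<in> L \<alpha>" using Klim_b[OF cA[OF a] cauA[OF a] zero_less_one hN[OF N1 a], of N1 a]
      unfolding L_def by auto
    thus ?thesis by blast
  qed
  have Lanti: "L \<beta> \<subseteq> L \<alpha>" if ab: "0 \<le> \<alpha>" "\<alpha> \<le> \<beta>" "\<beta> \<le> 1" for \<alpha> \<beta>
  proof
    fix x assume x: "x \<in> L \<beta>"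
    have bi: "\<beta> \<in> {0..1}" using ab by simp
    have le: "infdist x (level (u k) \<alpha>) \<le> infdist x (level (u k) \<beta>)" for k
      by (rule infdist_mono[OF level_mono[OF ab(1,2)]]) (use cA[OF bi] in blast)
    have lb: "(\<lambda>k. infdist x (level (u k) \<beta>)) \<longlonglongrightarrow> 0" using x unfolding L_def Klim_def by simp
    have "(\<lambda>k. infdist x (level (u k) \<alpha>)) \<longlonglongrightarrow> 0"
    proof (rule tendsto_sandwich[where f="\<lambda>k. 0" and h="\<lambda>k. infdist x (level (u k) \<beta>)"])
      show "eventually (\<lambda>k. 0 \<le> infdist x (level (u k) \<alpha>)) sequentially" by (simp add: infdist_nonneg)
      show "eventually (\<lambda>k. infdist x (level (u k) \<alpha>) \<le> infdist x (level (u k) \<beta>)) sequentially"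
        using le by simp
    qed (use lb in simp_all)
    thus "x \<in> L \<alpha>" unfolding L_def Klim_def by simp
  qed
  have Lleft: "x \<in> L \<alpha>" if a: "0 < \<alpha>" "\<alpha> \<le> 1" and hx: "\<And>\<beta>. 0 < \<beta> \<Longrightarrow> \<beta> < \<alpha> \<Longrightarrow> x \<in> L \<beta>" for x \<alpha>
    unfolding L_def Klim_def mem_Collect_eq
  proof (rule tendstoI)
    fix \<epsilon> :: real assume \<epsilon>: "0 < \<epsilon>"
    obtain N where N: "\<forall>p\<ge>N. \<forall>q\<ge>N. d_inf (u p) (u q) \<le> \<epsilon> / 2" using cau \<epsilon> by (meson half_gt_zero)
    show "eventually (\<lambda>k. dist (infdist x (level (u k) \<alpha>)) 0 < \<epsilon>) sequentially"
      unfolding eventually_sequentially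
    proof (intro exI[of _ N] allI impI)
      fix k assume k: "N \<le> k"
      have "infdist x (level (u k) \<beta>) \<le> \<epsilon> / 2" if b: "0 < \<beta>" "\<beta> < \<alpha>" for \<beta>
      proof -
        have bi: "\<beta> \<in> {0..1}" using b a by simp
        show ?thesis using Klim_a[OF cA[OF bi] hN[OF N bi], of x k] hx[OF b] k unfolding L_def by simp
      qed
      hence "infdist x (level (u k) \<alpha>) \<le> \<epsilon> / 2" using lev_lim[OF _ a] u by blast
      thus "dist (infdist x (level (u k) \<alpha>)) 0 < \<epsilon>" using \<epsilon> infdist_nonneg[of x "level (u k) \<alpha>"]
        by (simp add: dist_real_def)
    qed
  qed
  define S where "S x = insert 0 {\<alpha>. 0 < \<alpha> \<and> \<alpha> \<le> 1 \<and> x \<in> L \<alpha>}" for x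
  define v where "v x = Sup (S x)" for x
  have bddS: "bdd_above (S x)" for x unfolding S_def by (intro bdd_aboveI[of _ 1]) auto
  have v01: "0 \<le> v x" "v x \<le> 1" for x
  proof -
    show "0 \<le> v x" unfolding v_def using bddS by (intro cSup_upper) (auto simp: S_def)
    show "v x \<le> 1" unfolding v_def by (rule cSup_least) (auto simp: S_def)
  qed
  have vchar: "\<alpha> \<le> v x \<longleftrightarrow> x \<in> L \<alpha>" if a: "0 < \<alpha>" "\<alpha> \<le> 1" for x \<alpha>
  proof
    assume "x \<in> L \<alpha>"
    thus "\<alpha> \<le> v x" unfolding v_def using a bddS by (intro cSup_upper) (auto simp: S_def)
  next
    assume av: "\<alpha> \<le> v x"
    show "x \<in> L \<alpha>"
    proof (rule Lleft[OF a])
      fix \<beta> :: real assume b: "0 < \<beta>" "\<beta> < \<alpha>"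
      hence "\<beta> < Sup (S x)" using av unfolding v_def by simp
      then obtain \<gamma> where g: "\<gamma> \<in> S x" "\<beta> < \<gamma>" using less_cSup_iff[of "S x" \<beta>] bddS by (auto simp: S_def)
      hence g': "0 < \<gamma>" "\<gamma> \<le> 1" "x \<in> L \<gamma>" using b unfolding S_def by auto
      thus "x \<in> L \<beta>" using Lanti[of \<beta> \<gamma>] b g(2) by auto
    qed
  qed
  have lev: "level v \<alpha> = L \<alpha>" if a: "0 < \<alpha>" "\<alpha> \<le> 1" for \<alpha>
    using vchar[OF a] a level_pos[of \<alpha> v] by auto
  have vF: "v \<in> Fstar"
  proof -
    obtain x where "x \<in> L 1" using Lne[of 1] by auto
    hence "v x = 1" using vchar[of 1 x] v01[of x] by simp
    moreover have "usc v"
    proof (rule closed_levels_usc)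
      fix \<alpha> :: real assume a: "0 < \<alpha>" "\<alpha> \<le> 1"
      have "{x. \<alpha> \<le> v x} = L \<alpha>" using lev[OF a] level_pos[of \<alpha> v] a by simp
      thus "closed {x. \<alpha> \<le> v x}" using Lcomp[of \<alpha>] a compact_imp_closed by simp
    qed (use v01 in auto)
    moreover have "compact (level v 0)"
    proof -
      have "{x. 0 < v x} \<subseteq> L 0"
      proof
        fix x assume "x \<in> {x. 0 < v x}"
        hence x: "0 < v x" by simp
        hence "x \<in> L (v x)" using vchar[of "v x" x] v01[of x] by simp
        thus "x \<in> L 0" using Lanti[of 0 "v x"] v01[of x] by auto
      qed
      moreover have "closed (L 0)" using Lcomp[of 0] compact_imp_closed by simp
      ultimately have "closure {x. 0 < v x} \<subseteq> L 0" by (rule closure_minimal)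
      hence "level v 0 = L 0 \<inter> closure {x. 0 < v x}" unfolding level_def by auto
      thus ?thesis using Lcomp[of 0] by (simp add: compact_Int_closed)
    qed
    ultimately show ?thesis unfolding Fstar_def using v01 by blast
  qed
  have "(\<lambda>k. d_inf (u k) v) \<longlonglongrightarrow> 0"
  proof (rule tendstoI)
    fix \<epsilon> :: real assume \<epsilon>: "0 < \<epsilon>"
    obtain N where N: "\<forall>p\<ge>N. \<forall>q\<ge>N. d_inf (u p) (u q) \<le> \<epsilon> / 4" using cau \<epsilon> by (meson divide_pos_pos zero_less_numeral)
    show "eventually (\<lambda>k. dist (d_inf (u k) v) 0 < \<epsilon>) sequentially"
      unfolding eventually_sequentially
    proof (intro exI[of _ N] allI impI)
      fix k assume k: "N \<le> k"
      have "d_inf (u k) v \<le> \<epsilon> / 2"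
      proof (rule level0_bound[OF u[rule_format] vF])
        fix \<alpha> :: real assume a: "0 < \<alpha>" "\<alpha> \<le> 1"
        have ai: "\<alpha> \<in> {0..1}" using a by simp
        have hA: "\<forall>p\<ge>N. \<forall>q\<ge>N. hausdorff (level (u p) \<alpha>) (level (u q) \<alpha>) \<le> \<epsilon> / 4" using hN[OF N ai] .
        have "(\<forall>y\<in>level (u k) \<alpha>. infdist y (L \<alpha>) \<le> \<epsilon> / 2) \<and> (\<forall>x\<in>L \<alpha>. infdist x (level (u k) \<alpha>) \<le> \<epsilon> / 2)"
        proof (intro conjI ballI)
          fix y assume y: "y \<in> level (u k) \<alpha>"
          obtain l where l: "l \<in> L \<alpha>" "dist y l \<le> 2 * (\<epsilon> / 4)"
            using Klim_b[OF cA[OF ai] cauA[OF ai] _ hA k y] \<epsilon> unfolding L_def by auto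
          thus "infdist y (L \<alpha>) \<le> \<epsilon> / 2" using infdist_le2[of l "L \<alpha>" y "\<epsilon> / 2"] by simp
        next
          fix x assume x: "x \<in> L \<alpha>"
          show "infdist x (level (u k) \<alpha>) \<le> \<epsilon> / 2"
            using Klim_a[OF cA[OF ai] hA, of x k] x k \<epsilon> unfolding L_def by simp
        qed
        thus "hausdorff (level (u k) \<alpha>) (level v \<alpha>) \<le> \<epsilon> / 2"
          unfolding lev[OF a] using hausdorff_le_iff[OF lev_facts(1)[OF u[rule_format] ai] Lcomp[OF ai]
              lev_facts(2)[OF u[rule_format] ai] Lne[OF ai]] by blast
      qed
      thus "dist (d_inf (u k) v) 0 < \<epsilon>" using \<epsilon> dinf_nonneg[OF u[rule_format] vF, of k]
        by (simp add: dist_real_def)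
    qed
  qed
  thus ?thesis using vF by blast
qed



definition goodpsi :: "(real \<Rightarrow> real) \<Rightarrow> bool" where
  "goodpsi \<Psi> \<longleftrightarrow> mono_on {0..} \<Psi> \<and> (\<forall>t\<ge>0. 0 \<le> \<Psi> t) \<and> (\<forall>t>0. (\<lambda>k. (\<Psi> ^^ k) t) \<longlonglongrightarrow> 0)"

lemma goodpsiD:
  assumes "goodpsi \<Psi>"
  shows "mono_on {0..} \<Psi>" "\<And>t. 0 \<le> t \<Longrightarrow> 0 \<le> \<Psi> t" "\<And>t. 0 < t \<Longrightarrow> (\<lambda>k. (\<Psi> ^^ k) t) \<longlonglongrightarrow> 0"
  using assms unfolding goodpsi_def by auto

lemma psi_mono: "goodpsi \<Psi> \<Longrightarrow> 0 \<le> s \<Longrightarrow> s \<le> t \<Longrightarrow> \<Psi> s \<le> \<Psi> t"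
  using goodpsiD(1) by (rule mono_onD) auto

lemma iter_nonneg: "goodpsi \<Psi> \<Longrightarrow> 0 \<le> t \<Longrightarrow> 0 \<le> (\<Psi> ^^ k) t"
  by (induction k) (auto intro: goodpsiD(2))

lemma psi_less:
  assumes g: "goodpsi \<Psi>" and t: "0 < t"
  shows "\<Psi> t < t"
proof (rule ccontr)
  assume "\<not> \<Psi> t < t"
  hence ge: "t \<le> \<Psi> t" by simp
  have "t \<le> (\<Psi> ^^ k) t" for k
  proof (induction k)
    case 0 thus ?case by simp
  next
    case (Suc k)
    have "\<Psi> t \<le> \<Psi> ((\<Psi> ^^ k) t)" using psi_mono[OF g _ Suc] t by simp
    thus ?case using ge by simp
  qed
  hence "t \<le> 0" using goodpsiD(3)[OF g t] by (intro tendsto_lowerbound[of "\<lambda>k. (\<Psi> ^^ k) t"]) auto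
  thus False using t by simp
qed

lemma psi_zero:
  assumes g: "goodpsi \<Psi>"
  shows "\<Psi> 0 = 0"
proof -
  have "\<Psi> 0 \<le> 0 + e" if "0 < e" for e
    using psi_mono[OF g, of 0 e] psi_less[OF g that] that by simp
  hence "\<Psi> 0 \<le> 0" by (rule field_le_epsilon)
  thus ?thesis using goodpsiD(2)[OF g, of 0] by simp
qed

lemma psi_le: "goodpsi \<Psi> \<Longrightarrow> 0 \<le> t \<Longrightarrow> \<Psi> t \<le> t"
proof (cases "t = 0")
  case True
  assume "goodpsi \<Psi>"
  thus ?thesis using True psi_zero[of \<Psi>] by simp
next
  case False
  assume "goodpsi \<Psi>" "0 \<le> t"
  thus ?thesis using False psi_less[of \<Psi> t] by simp
qed

lemma iter_zero: "goodpsi \<Psi> \<Longrightarrow> (\<Psi> ^^ k) 0 = 0"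
  by (induction k) (auto simp: psi_zero)

lemma iter_lim: "goodpsi \<Psi> \<Longrightarrow> 0 \<le> t \<Longrightarrow> (\<lambda>k. (\<Psi> ^^ k) t) \<longlonglongrightarrow> 0"
  using goodpsiD(3) iter_zero by (cases "t = 0") auto

lemma iter_mono: "goodpsi \<Psi> \<Longrightarrow> 0 \<le> s \<Longrightarrow> s \<le> t \<Longrightarrow> (\<Psi> ^^ k) s \<le> (\<Psi> ^^ k) t"
proof (induction k)
  case (Suc k)
  thus ?case using psi_mono[OF Suc.prems(1) iter_nonneg[OF Suc.prems(1,2)]] by simp
qed simp

lemma goodpsi_Max:
  fixes n :: nat
  assumes n: "0 < n" and g: "\<forall>j<n. goodpsi (\<psi> j)"
  shows "goodpsi (\<lambda>t. Max ((\<lambda>j. \<psi> j t) ` {..<n}))"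
proof -
  define \<Psi> where "\<Psi> t = Max ((\<lambda>j. \<psi> j t) ` {..<n})" for t
  have ne: "(\<lambda>j. \<psi> j t) ` {..<n} \<noteq> {}" for t using n by auto
  have fin: "finite ((\<lambda>j. \<psi> j t) ` {..<n})" for t by (rule finite_imageI) simp
  have Mge: "\<psi> j t \<le> \<Psi> t" if "j < n" for j t unfolding \<Psi>_def using that
    by (metis Max_ge finite_imageI finite_lessThan image_eqI lessThan_iff)
  have Mle: "\<Psi> t \<le> c \<longleftrightarrow> (\<forall>j<n. \<psi> j t \<le> c)" for t c
    unfolding \<Psi>_def using ne fin by (subst Max_le_iff) auto
  have mono: "mono_on {0..} \<Psi>"
  proof (rule mono_onI)
    fix s t :: real assume "s \<in> {0..}" "t \<in> {0..}" "s \<le> t"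
    thus "\<Psi> s \<le> \<Psi> t" using Mle Mge psi_mono g by (meson atLeast_iff order_trans)
  qed
  have nonneg: "0 \<le> \<Psi> t" if "0 \<le> t" for t
    using Mge[OF n, of t] goodpsiD(2)[OF g[rule_format, OF n] that] by linarith
  have lessP: "\<Psi> t < t" if "0 < t" for t
  proof -
    have "\<forall>j<n. \<psi> j t < t" using psi_less g that by blast
    thus ?thesis unfolding \<Psi>_def using ne fin by (subst Max_less_iff) auto
  qed
  have leP: "\<Psi> t \<le> t" if "0 \<le> t" for t
    using Mle psi_le g that by blast
  have lim: "(\<lambda>k. (\<Psi> ^^ k) t) \<longlonglongrightarrow> 0" if t: "0 < t" for t
  proof -
    let ?s = "\<lambda>k. (\<Psi> ^^ k) t"
    have snn: "0 \<le> ?s k" for k by (induction k) (use t nonneg in auto)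
    have sdec: "?s (Suc k) \<le> ?s k" for k using leP[OF snn[of k]] by simp
    have sdec': "?s (k + p) \<le> ?s k" for k p
    proof (induction p)
      case (Suc p)
      have "?s (k + Suc p) \<le> ?s (k + p)" using sdec[of "k + p"] by simp
      thus ?case using Suc by linarith
    qed simp
    have small: "\<exists>k. ?s k < \<epsilon>" if \<epsilon>: "0 < \<epsilon>" for \<epsilon>
    proof (rule ccontr)
      assume "\<not> (\<exists>k. ?s k < \<epsilon>)"
      hence ge: "\<forall>k. \<epsilon> \<le> ?s k" by (simp add: not_less)
      define c where "c = Inf (range ?s)"
      have bdd: "bdd_below (range ?s)" using snn by (intro bdd_belowI[of _ 0]) auto
      have cle: "c \<le> ?s k" for k unfolding c_def using bdd by (intro cInf_lower) auto
      have cge: "\<epsilon> \<le> c" unfolding c_def using ge by (intro cInf_greatest) auto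
      hence cpos: "0 < c" using \<epsilon> by simp
      have sgt: "c < ?s k" for k
      proof (rule ccontr)
        assume "\<not> c < ?s k"
        hence "?s k = c" using cle[of k] by simp
        hence "?s (Suc k) = \<Psi> c" by simp
        hence "?s (Suc k) < c" using lessP[OF cpos] by simp
        thus False using cle[of "Suc k"] by simp
      qed
      have "\<exists>j<n. \<forall>x>c. c < \<psi> j x"
      proof (rule ccontr)
        assume "\<not> (\<exists>j<n. \<forall>x>c. c < \<psi> j x)"
        hence "\<forall>j<n. \<exists>x. c < x \<and> \<psi> j x \<le> c" by (meson not_less)
        then obtain xg where xg: "\<And>j. j < n \<Longrightarrow> c < xg j \<and> \<psi> j (xg j) \<le> c" by metis
        define x' where "x' = Min (xg ` {..<n})"
        have x'gt: "c < x'" unfolding x'_def using n xg by (subst Min_gr_iff) auto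
        have x'le: "x' \<le> xg j" if "j < n" for j unfolding x'_def using that by (intro Min_le) auto
        have "\<Psi> x' \<le> c" unfolding Mle
        proof (intro allI impI)
          fix j assume j: "j < n"
          have "\<psi> j x' \<le> \<psi> j (xg j)" using psi_mono[OF g[rule_format, OF j]] x'gt cpos x'le[OF j] by simp
          thus "\<psi> j x' \<le> c" using xg[OF j] by simp
        qed
        have "c < x'" by (fact x'gt)
        hence "Inf (range ?s) < x'" unfolding c_def .
        then obtain k where k: "?s k < x'" using cInf_less_iff[of "range ?s" x'] bdd by auto
        have "?s (Suc k) \<le> \<Psi> x'" using mono k snn[of k] by (simp add: mono_onD)
        hence "?s (Suc k) \<le> c" using \<open>\<Psi> x' \<le> c\<close> by simp
        thus False using sgt[of "Suc k"] by simp
      qed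
      then obtain j where j: "j < n" "\<forall>x>c. c < \<psi> j x" by blast
      have "c < (\<psi> j ^^ i) t" for i
        by (induction i) (use sgt[of 0] j(2) in auto)
      hence "\<forall>i. c \<le> (\<psi> j ^^ i) t" by (simp add: less_imp_le)
      hence "c \<le> 0" using goodpsiD(3)[OF g[rule_format, OF j(1)] t]
        by (intro tendsto_lowerbound[of "\<lambda>i. (\<psi> j ^^ i) t"]) (auto intro: always_eventually)
      thus False using cpos by simp
    qed
    show ?thesis
    proof (rule tendstoI)
      fix \<epsilon> :: real assume \<epsilon>: "0 < \<epsilon>"
      obtain k where k: "?s k < \<epsilon>" using small[OF \<epsilon>] by blast
      show "eventually (\<lambda>i. dist (?s i) 0 < \<epsilon>) sequentially"
        unfolding eventually_sequentially
      proof (intro exI[of _ k] allI impI)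
        fix i assume "k \<le> i"
        then obtain p where "i = k + p" by (metis le_add_diff_inverse)
        hence "?s i \<le> ?s k" using sdec' by simp
        thus "dist (?s i) 0 < \<epsilon>" using k snn[of i] by (simp add: dist_real_def)
      qed
    qed
  qed
  show ?thesis unfolding goodpsi_def using mono nonneg lim unfolding \<Psi>_def by blast
qed



locale absms =
  fixes S :: "'b set" and d :: "'b \<Rightarrow> 'b \<Rightarrow> real"
  assumes nonneg: "x \<in> S \<Longrightarrow> y \<in> S \<Longrightarrow> 0 \<le> d x y"
    and refl: "x \<in> S \<Longrightarrow> d x x = 0"
    and sym: "d x y = d y x"
    and tri: "x \<in> S \<Longrightarrow> y \<in> S \<Longrightarrow> z \<in> S \<Longrightarrow> d x z \<le> d x y + d y z"
    and zero: "x \<in> S \<Longrightarrow> y \<in> S \<Longrightarrow> d x y \<le> 0 \<Longrightarrow> x = y"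
    and compl: "\<And>x. (\<forall>k. x k \<in> S) \<Longrightarrow> (\<forall>e>0. \<exists>N. \<forall>p\<ge>N. \<forall>q\<ge>N. d (x p) (x q) \<le> e)
                  \<Longrightarrow> \<exists>l\<in>S. (\<lambda>k. d (x k) l) \<longlonglongrightarrow> 0"
begin

lemma fixpoint:
  assumes g: "goodpsi \<Psi>" and gS: "\<And>x. x \<in> S \<Longrightarrow> f x \<in> S"
    and contr: "\<And>x y. x \<in> S \<Longrightarrow> y \<in> S \<Longrightarrow> d (f x) (f y) \<le> \<Psi> (d x y)"
    and x0: "x0 \<in> S"
  shows "\<exists>x\<in>S. f x = x"
proof -
  define x where "x k = (f ^^ k) x0" for k
  have xS: "x k \<in> S" for k unfolding x_def by (induction k) (use x0 gS in auto)
  have xS': "\<forall>k. x k \<in> S" using xS by blast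
  have xsuc: "x (Suc k) = f (x k)" for k unfolding x_def by simp
  define d0 where "d0 = d (x 0) (x 1)"
  have d0: "0 \<le> d0" unfolding d0_def using nonneg xS by blast
  have step: "d (x k) (x (Suc k)) \<le> (\<Psi> ^^ k) d0" for k
  proof (induction k)
    case 0 thus ?case by (simp add: d0_def)
  next
    case (Suc k)
    have "d (x (Suc k)) (x (Suc (Suc k))) \<le> \<Psi> (d (x k) (x (Suc k)))"
      using contr[OF xS[of k] xS[of "Suc k"]] by (simp add: xsuc)
    also have "\<dots> \<le> \<Psi> ((\<Psi> ^^ k) d0)" using psi_mono[OF g _ Suc] nonneg[OF xS xS] by simp
    finally show ?case by simp
  qed
  have ball: "\<exists>k. \<forall>p. d (x k) (x (k + p)) \<le> \<epsilon>" if \<epsilon>: "0 < \<epsilon>" for \<epsilon>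
  proof -
    have dpos: "0 < \<epsilon> - \<Psi> \<epsilon>" using psi_less[OF g \<epsilon>] by simp
    have "eventually (\<lambda>k. dist ((\<Psi> ^^ k) d0) 0 < \<epsilon> - \<Psi> \<epsilon>) sequentially"
      using iter_lim[OF g d0] dpos by (rule tendstoD)
    then obtain k where k: "dist ((\<Psi> ^^ k) d0) 0 < \<epsilon> - \<Psi> \<epsilon>" by (auto simp: eventually_sequentially)
    hence kk: "d (x k) (x (Suc k)) < \<epsilon> - \<Psi> \<epsilon>" using step[of k] by (simp add: dist_real_def)
    have "d (x k) (x (k + p)) \<le> \<epsilon>" for p
    proof (induction p)
      case 0 thus ?case using refl[OF xS] \<epsilon> by simp
    next
      case (Suc p)
      have "d (x k) (x (k + Suc p)) \<le> d (x k) (x (Suc k)) + d (x (Suc k)) (x (Suc (k + p)))"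
        using tri[OF xS xS xS] by simp
      also have "d (x (Suc k)) (x (Suc (k + p))) \<le> \<Psi> (d (x k) (x (k + p)))"
        using contr[OF xS[of k] xS[of "k + p"]] by (simp add: xsuc)
      also have "\<Psi> (d (x k) (x (k + p))) \<le> \<Psi> \<epsilon>" using psi_mono[OF g _ Suc] nonneg[OF xS xS] by simp
      finally show ?case using kk by simp
    qed
    thus ?thesis by blast
  qed
  have "\<forall>e>0. \<exists>N. \<forall>p\<ge>N. \<forall>q\<ge>N. d (x p) (x q) \<le> e"
  proof (intro allI impI)
    fix e :: real assume e: "0 < e"
    obtain k where k: "\<forall>p. d (x k) (x (k + p)) \<le> e / 2" using ball[of "e / 2"] e by auto
    show "\<exists>N. \<forall>p\<ge>N. \<forall>q\<ge>N. d (x p) (x q) \<le> e"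
    proof (intro exI[of _ k] allI impI)
      fix p q assume "k \<le> p" "k \<le> q"
      then obtain p' q' where pq: "p = k + p'" "q = k + q'" by (metis le_add_diff_inverse)
      have "d (x p) (x q) \<le> d (x p) (x k) + d (x k) (x q)" using tri[OF xS xS xS] .
      thus "d (x p) (x q) \<le> e" using k[rule_format, of p'] k[rule_format, of q'] pq sym[of "x p" "x k"] by simp
    qed
  qed
  then obtain l where l: "l \<in> S" "(\<lambda>k. d (x k) l) \<longlonglongrightarrow> 0" using compl[OF xS'] by blast
  have le: "d l (f l) \<le> d (x (Suc k)) l + d (x k) l" for k
  proof -
    have "d l (f l) \<le> d l (x (Suc k)) + d (x (Suc k)) (f l)" using tri[OF l(1) xS gS[OF l(1)]] .
    also have "d (x (Suc k)) (f l) \<le> \<Psi> (d (x k) l)" using contr[OF xS[of k] l(1)] by (simp add: xsuc)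
    also have "\<Psi> (d (x k) l) \<le> d (x k) l" using psi_le[OF g nonneg[OF xS l(1)]] .
    finally show ?thesis using sym[of l "x (Suc k)"] by simp
  qed
  have "(\<lambda>k. d (x (Suc k)) l + d (x k) l) \<longlonglongrightarrow> 0 + 0"
    using l(2) LIMSEQ_Suc[OF l(2)] by (intro tendsto_add) auto
  hence "d l (f l) \<le> 0" using le by (intro tendsto_lowerbound[of "\<lambda>k. d (x (Suc k)) l + d (x k) l"]) (auto intro: always_eventually)
  hence "l = f l" using zero[OF l(1) gS[OF l(1)]] by simp
  hence "f l = l" by (rule HOL.sym)
  thus ?thesis using l(1) by blast
qed

lemma msteps:
  fixes T :: "'b list \<Rightarrow> 'b" and m :: nat
  assumes g: "goodpsi \<Psi>" and m: "1 \<le> m"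
    and TS: "\<And>xs. length xs = m \<Longrightarrow> set xs \<subseteq> S \<Longrightarrow> T xs \<in> S"
    and contr: "\<And>xs ys. length xs = m \<Longrightarrow> set xs \<subseteq> S \<Longrightarrow> length ys = m \<Longrightarrow> set ys \<subseteq> S \<Longrightarrow>
        d (T xs) (T ys) \<le> \<Psi> (MAX i\<in>{..<m}. d (xs ! i) (ys ! i))"
    and xs: "xs \<in> S" and fxp: "T (replicate m xs) = xs"
    and u0: "\<forall>i<m. u i \<in> S"
    and urec: "\<forall>k. u (k + m) = T (map (\<lambda>i. u (k + m - 1 - i)) [0..<m])"
  shows "(\<lambda>k. d (u k) xs) \<longlonglongrightarrow> 0"
proof -
  have uS: "u k \<in> S" for k
  proof (induction k rule: less_induct)
    case (less k)
    show ?case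
    proof (cases "k < m")
      case True thus ?thesis using u0 by simp
    next
      case False
      then obtain k' where k': "k = k' + m" by (metis add.commute le_add_diff_inverse not_less)
      have "set (map (\<lambda>i. u (k' + m - 1 - i)) [0..<m]) \<subseteq> S"
        using less k' m by auto
      thus ?thesis using urec k' TS by simp
    qed
  qed
  define e where "e k = d (u k) xs" for k
  have enn: "0 \<le> e k" for k unfolding e_def using nonneg uS xs by blast
  define D where "D k = (MAX i\<in>{..<m}. e (k + i))" for k
  have fin: "finite ((\<lambda>i. e (k + i)) ` {..<m})" for k by simp
  have ne: "(\<lambda>i. e (k + i)) ` {..<m} \<noteq> {}" for k using m by (auto simp: lessThan_empty_iff)
  have Dge: "e (k + i) \<le> D k" if "i < m" for k i unfolding D_def using that by (intro Max_ge) auto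
  have Dle: "D k \<le> c \<longleftrightarrow> (\<forall>i<m. e (k + i) \<le> c)" for k c unfolding D_def using fin ne by (subst Max_le_iff) auto
  have Dnn: "0 \<le> D k" for k using Dge[of 0 k] enn[of k] m by simp
  have erec: "e (k + m) \<le> \<Psi> (D k)" for k
  proof -
    let ?xs = "map (\<lambda>i. u (k + m - 1 - i)) [0..<m]"
    have "e (k + m) = d (T ?xs) (T (replicate m xs))" unfolding e_def using urec fxp by simp
    also have "\<dots> \<le> \<Psi> (MAX i\<in>{..<m}. d (?xs ! i) (replicate m xs ! i))"
      by (rule contr) (use uS xs in auto)
    also have "\<dots> \<le> \<Psi> (D k)"
    proof (rule psi_mono[OF g])
      have "d (?xs ! i) (replicate m xs ! i) \<le> D k" if i: "i < m" for i
        using Dge[of "m - 1 - i" k] i unfolding e_def by (simp add: algebra_simps)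
      thus "(MAX i\<in>{..<m}. d (?xs ! i) (replicate m xs ! i)) \<le> D k" using m by (subst Max_le_iff) (auto simp: lessThan_empty_iff)
      show "0 \<le> (MAX i\<in>{..<m}. d (?xs ! i) (replicate m xs ! i))"
      proof -
        have "d (?xs ! 0) (replicate m xs ! 0) \<le> (MAX i\<in>{..<m}. d (?xs ! i) (replicate m xs ! i))"
          using m by (intro Max_ge) auto
        moreover have "0 \<le> d (?xs ! 0) (replicate m xs ! 0)" using m by (intro nonneg) (use uS xs in auto)
        ultimately show ?thesis by linarith
      qed
    qed
    finally show ?thesis .
  qed
  have Ddec: "D (Suc k) \<le> D k" for k
    unfolding Dle
  proof (intro allI impI)
    fix i assume i: "i < m"
    show "e (Suc k + i) \<le> D k"
    proof (cases "Suc i < m")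
      case True thus ?thesis using Dge[of "Suc i" k] by simp
    next
      case False
      hence "Suc k + i = k + m" using i by simp
      hence "e (Suc k + i) = e (k + m)" by (rule arg_cong[where f=e])
      thus ?thesis using erec[of k] psi_le[OF g Dnn[of k]] by linarith
    qed
  qed
  have Ddec': "D (k + p) \<le> D k" for k p
  proof (induction p)
    case (Suc p) thus ?case using Ddec[of "k + p"] by simp
  qed simp
  have Dm: "D (k + m) \<le> \<Psi> (D k)" for k
    unfolding Dle
  proof (intro allI impI)
    fix i assume i: "i < m"
    have "e ((k + i) + m) \<le> \<Psi> (D (k + i))" by (rule erec)
    also have "\<dots> \<le> \<Psi> (D k)" using psi_mono[OF g Dnn Ddec'] .
    finally show "e (k + m + i) \<le> \<Psi> (D k)" by (simp add: algebra_simps)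
  qed
  have Dp: "D (p * m) \<le> (\<Psi> ^^ p) (D 0)" for p
  proof (induction p)
    case (Suc p)
    have "D (Suc p * m) = D (p * m + m)" by (simp add: algebra_simps)
    also have "\<dots> \<le> \<Psi> (D (p * m))" by (rule Dm)
    also have "\<dots> \<le> \<Psi> ((\<Psi> ^^ p) (D 0))" using psi_mono[OF g Dnn Suc] .
    finally show ?case by simp
  qed simp
  have ek: "e k \<le> (\<Psi> ^^ (k div m)) (D 0)" for k
  proof -
    have "k = (k div m) * m + k mod m" by simp
    hence "e k \<le> D ((k div m) * m)"
      using Dge[of "k mod m" "(k div m) * m"] m by (metis One_nat_def Suc_le_lessD mod_less_divisor)
    thus ?thesis using Dp[of "k div m"] by simp
  qed
  show ?thesis unfolding e_def[symmetric]
  proof (rule tendstoI)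
    fix \<epsilon> :: real assume \<epsilon>: "0 < \<epsilon>"
    have "eventually (\<lambda>p. dist ((\<Psi> ^^ p) (D 0)) 0 < \<epsilon>) sequentially"
      using iter_lim[OF g Dnn] \<epsilon> by (rule tendstoD)
    then obtain P where P: "\<forall>p\<ge>P. dist ((\<Psi> ^^ p) (D 0)) 0 < \<epsilon>" by (auto simp: eventually_sequentially)
    show "eventually (\<lambda>k. dist (e k) 0 < \<epsilon>) sequentially"
      unfolding eventually_sequentially
    proof (intro exI[of _ "P * m"] allI impI)
      fix k assume k: "P * m \<le> k"
      hence "P \<le> k div m" using m by (metis div_le_mono nonzero_mult_div_cancel_right not_one_le_zero)
      hence "(\<Psi> ^^ (k div m)) (D 0) < \<epsilon>" using P by (auto simp: dist_real_def)
      thus "dist (e k) 0 < \<epsilon>" using ek[of k] enn[of k] by (simp add: dist_real_def)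
    qed
  qed
qed

end


lemma Fstar_nonempty: "\<exists>w::'a::metric_space \<Rightarrow> real. w \<in> Fstar"
proof -
  define a :: 'a where "a = undefined"
  define w :: "'a \<Rightarrow> real" where "w x = (if x = a then 1 else 0)" for x
  have lv: "{x. \<alpha> \<le> w x} = {a}" if "0 < \<alpha>" "\<alpha> \<le> 1" for \<alpha> using that by (auto simp: w_def)
  have "usc w"
    by (rule closed_levels_usc) (auto simp: w_def lv)
  moreover have "{x. 0 < w x} = {a}" by (auto simp: w_def)
  hence "level w 0 = {a}" unfolding level_def by simp
  ultimately have "w \<in> Fstar" unfolding Fstar_def by (auto simp: w_def)
  thus ?thesis by blast
qed

lemma absms_Fstar: "absms (Fstar :: ('a::complete_space \<Rightarrow> real) set) (d_inf :: ('a \<Rightarrow> real) \<Rightarrow> ('a \<Rightarrow> real) \<Rightarrow> real)"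
proof
  show "\<And>x y. x \<in> Fstar \<Longrightarrow> y \<in> Fstar \<Longrightarrow> 0 \<le> d_inf x y" by (rule dinf_nonneg)
  show "\<And>x. x \<in> Fstar \<Longrightarrow> d_inf x x = 0" by (rule dinf_refl)
  show "\<And>x y. d_inf x y = d_inf y x" by (rule dinf_sym)
  show "\<And>x y z. x \<in> Fstar \<Longrightarrow> y \<in> Fstar \<Longrightarrow> z \<in> Fstar \<Longrightarrow> d_inf x z \<le> d_inf x y + d_inf y z"
    by (rule dinf_triangle)
  show "\<And>x y. x \<in> Fstar \<Longrightarrow> y \<in> Fstar \<Longrightarrow> d_inf x y \<le> 0 \<Longrightarrow> x = y" by (rule dinf_zero)
  show "\<And>x :: nat \<Rightarrow> 'a \<Rightarrow> real. \<forall>k. x k \<in> Fstar \<Longrightarrow> \<forall>e>0. \<exists>N. \<forall>p\<ge>N. \<forall>q\<ge>N. d_inf (x p) (x q) \<le> e \<Longrightarrow>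
         \<exists>l\<in>Fstar. (\<lambda>k. d_inf (x k) l) \<longlonglongrightarrow> 0"
    by (rule Fstar_complete)
qed

theorem mainTheorem12:
  fixes \<phi> :: "nat \<Rightarrow> 'a::complete_space list \<Rightarrow> 'a"
    and \<rho> :: "nat \<Rightarrow> real \<Rightarrow> real"
    and m n :: nat
  assumes "m \<ge> 1"
    and "\<forall>j<n. cont_m m (\<phi> j)"
    and "admissible n \<rho>"
    and "\<forall>j<n. gen_matkowski m (\<phi> j)"
  shows "\<exists>uZ. uZ \<in> Fstar \<and> uZ = ZS m n \<phi> \<rho> (replicate m uZ)
           \<and> (\<forall>v. v \<in> Fstar \<and> v = ZS m n \<phi> \<rho> (replicate m v) \<longrightarrow> v = uZ)
           \<and> (\<forall>u. (\<forall>i<m. u i \<in> Fstar) \<longrightarrow>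
                (\<forall>k. u (k + m) = ZS m n \<phi> \<rho> (map (\<lambda>i. u (k + m - 1 - i)) [0..<m])) \<longrightarrow>
                (\<lambda>k. d_inf (u k) uZ) \<longlonglongrightarrow> 0)"
proof -
  note m1 = assms(1)
  interpret G: gifzs m n \<phi> \<rho> using assms(1-3) by unfold_locales
  interpret A: absms "Fstar :: ('a \<Rightarrow> real) set" d_inf by (rule absms_Fstar)
  have "\<forall>j<n. \<exists>\<psi>::real \<Rightarrow> real. mono_on {0..} \<psi> \<and> \<psi> ` {0..} \<subseteq> {0..} \<and>
      (\<forall>t>0. (\<lambda>k. (\<psi> ^^ k) t) \<longlonglongrightarrow> 0) \<and>
      (\<forall>x\<in>Xpow m. \<forall>y\<in>Xpow m. dist (\<phi> j x) (\<phi> j y) \<le> \<psi> (dmax m x y))"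
    using assms(4) unfolding gen_matkowski_def by blast
  then obtain \<psi> :: "nat \<Rightarrow> real \<Rightarrow> real" where psi: "\<And>j. j < n \<Longrightarrow> mono_on {0..} (\<psi> j) \<and> \<psi> j ` {0..} \<subseteq> {0..} \<and>
      (\<forall>t>0. (\<lambda>k. (\<psi> j ^^ k) t) \<longlonglongrightarrow> 0) \<and>
      (\<forall>x\<in>Xpow m. \<forall>y\<in>Xpow m. dist (\<phi> j x) (\<phi> j y) \<le> \<psi> j (dmax m x y))"
    by metis
  have gj: "\<forall>j<n. goodpsi (\<psi> j)"
  proof (intro allI impI)
    fix j assume j: "j < n"
    show "goodpsi (\<psi> j)" unfolding goodpsi_def using psi[OF j] by auto
  qed
  define \<Psi> where "\<Psi> t = Max ((\<lambda>j. \<psi> j t) ` {..<n})" for t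
  have g: "goodpsi \<Psi>" unfolding \<Psi>_def by (rule goodpsi_Max[OF G.n_pos gj])
  have psi': "\<forall>j<n. mono_on {0..} (\<psi> j) \<and> (\<forall>x\<in>Xpow m. \<forall>y\<in>Xpow m. dist (\<phi> j x) (\<phi> j y) \<le> \<psi> j (dmax m x y))"
    using psi by blast
  have listF: "\<forall>i<m. xs ! i \<in> Fstar" if "length xs = m" "set xs \<subseteq> Fstar" for xs :: "('a \<Rightarrow> real) list"
    using that nth_mem by blast
  have TS: "ZS m n \<phi> \<rho> xs \<in> Fstar" if "length xs = m" "set xs \<subseteq> Fstar" for xs
    by (rule G.ZS_Fstar[OF listF[OF that]])
  have contr: "d_inf (ZS m n \<phi> \<rho> xs) (ZS m n \<phi> \<rho> ys) \<le> \<Psi> (MAX i\<in>{..<m}. d_inf (xs ! i) (ys ! i))"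
    if "length xs = m" "set xs \<subseteq> Fstar" "length ys = m" "set ys \<subseteq> Fstar" for xs ys
    using G.contraction[OF listF[OF that(1,2)] listF[OF that(3,4)] psi'] unfolding \<Psi>_def G.Dm_def .
  define f where "f x = ZS m n \<phi> \<rho> (replicate m x)" for x
  have fS: "f x \<in> Fstar" if "x \<in> Fstar" for x unfolding f_def using that by (intro TS) auto
  have mx: "(MAX i\<in>{..<m}. c) = c" for c :: real
  proof -
    have "(\<lambda>i. c) ` {..<m} = {c}" using m1 by (simp add: image_constant_conv lessThan_empty_iff)
    thus ?thesis by simp
  qed
  have fcontr: "d_inf (f x) (f y) \<le> \<Psi> (d_inf x y)" if "x \<in> Fstar" "y \<in> Fstar" for x y
  proof -
    have "set (replicate m x) \<subseteq> Fstar" "set (replicate m y) \<subseteq> Fstar" using that by (auto simp: set_replicate_conv_if)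
    thus ?thesis using contr[of "replicate m x" "replicate m y"] unfolding f_def by (simp add: mx)
  qed
  obtain x0 :: "'a \<Rightarrow> real" where x0: "x0 \<in> Fstar" using Fstar_nonempty by blast
  obtain uZ where uZ: "uZ \<in> Fstar" "f uZ = uZ" using A.fixpoint[OF g fS fcontr x0] by blast
  have fixZ: "ZS m n \<phi> \<rho> (replicate m uZ) = uZ" using uZ(2) unfolding f_def .
  have uniq: "v = uZ" if v: "v \<in> Fstar" "v = ZS m n \<phi> \<rho> (replicate m v)" for v
  proof -
    have fv: "f v = v" using v(2) unfolding f_def by simp
    have le: "d_inf v uZ \<le> \<Psi> (d_inf v uZ)" using fcontr[OF v(1) uZ(1)] fv uZ(2) by simp
    have "d_inf v uZ \<le> 0"
    proof (rule ccontr)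
      assume "\<not> d_inf v uZ \<le> 0"
      hence "0 < d_inf v uZ" by simp
      thus False using psi_less[OF g] le by (meson not_le)
    qed
    thus ?thesis using dinf_zero v(1) uZ(1) by blast
  qed
  have conv: "(\<lambda>k. d_inf (u k) uZ) \<longlonglongrightarrow> 0"
    if "\<forall>i<m. u i \<in> Fstar" "\<forall>k. u (k + m) = ZS m n \<phi> \<rho> (map (\<lambda>i. u (k + m - 1 - i)) [0..<m])" for u
    by (rule A.msteps[OF g m1 TS contr uZ(1) fixZ that])
  show ?thesis using uZ(1) fixZ uniq conv by metis
qed

end
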